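(* For every single-player extensive-form game $\Gamma$, $\mathrm{VoR}^{\mathrm{SC}}(\Gamma)\ge1$ for each $\mathrm{SC}\in\{\mathrm{wCDTNash},\mathrm{bCDTNash},\mathrm{wEDTNash},\mathrm{bEDTNash}\}$.
   Context: A single-player extensive-form game consists of a finite rooted tree (nodes $\mathcal H$, leaves $\mathcal Z$, actions $A_h$), nonterminal nodes belonging to Player 1 or chance (fixed distributions), utility $u_1:\mathcal Z\to\mathbb R_{\ge0}$, and a partition $\mathcal I_1$ of Player 1's nodes into infosets with common action sets $A_I$. For a node $h$, $\mathrm{obs}(h)$ is the sequence of (player, infoset, action) along the root-to-$h$ path (excluding $h$), and $\mathrm{obs}_1(h)$ its restriction to Player 1's entries. $\mathrm{pr}_1(\Gamma)$ has the same tree and utilities with each $I\in\mathcal I_1$ partitioned by $h\sim h'\iff\mathrm{obs}_1(h)=\mathrm{obs}_1(h')$. A behavioral strategy $\pi$ assigns $\pi(\cdot\mid I)\in\Delta(A_I)$; $\mathbb P(h\mid\pi)$ is the reach probability; $U_1(\pi)=\sum_z\mathbb P(z\mid\pi)u_1(z)$; $\pi^{I\mapsto\sigma}$ plays $\sigma$ at $I$ and $\pi$ elsewhere. EDT equilibrium: $\pi(\cdot\mid I)\in\arg\max_\sigma U_1(\pi^{I\mapsto\sigma})$ for all $I$. CDT equilibrium: $\pi$ is a KKT point of maximizing $U_1$ over $\prod_I\Delta(A_I)$. Let $I^{\mathrm{1st}}$ be nodes $h\in I$ with $I$ not appearing in $\mathrm{obs}(h)$, $\mathbb P(I\mid\pi)=\sum_{h\in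 I^{\mathrm{1st}}}\mathbb P(h\mid\pi)$, $\mathrm{Fr}(I\mid\pi)=\sum_{h\in I}\mathbb P(h\mid\pi)$, $U_1^{\mathrm{CDT}}(\sigma\mid\pi,I)=U_1(\pi)+\sum_{a\in A_I}(\sigma(a)-\pi(a\mid I))\partial U_1(\pi)/\partial\pi(a\mid I)$. $\pi$ is EDT-rational (resp. CDT-rational) if there are fully mixed $\pi^{(k)}\to\pi$ and $\varepsilon^{(k)}>0$, $\varepsilon^{(k)}\to0$, such that for all $k$, all $I$ with $\mathbb P(I\mid\pi^{(k)})>0$ (resp. $\mathrm{Fr}(I\mid\pi^{(k)})>0$), and all $\sigma\in\Delta(A_I)$: $(U_1(\pi^{(k),I\mapsto\sigma})-U_1(\pi^{(k)}))/\mathbb P(I\mid\pi^{(k)})\le\varepsilon^{(k)}$ (resp. $(U_1^{\mathrm{CDT}}(\sigma\mid\pi^{(k)},I)-U_1(\pi^{(k)}))/\mathrm{Fr}(I\mid\pi^{(k)})\le\varepsilon^{(k)}$). An EDT-Nash (resp. CDT-Nash) equilibrium is an EDT (resp. CDT) equilibrium realization-equivalent (same reach probabilities at all nodes) to an EDT-rational (resp. CDT-rational) strategy. $u_1(\mathrm{bX}(\cdot))$ / $u_1(\mathrm{wX}(\cdot))$ is the max / min of $U_1$ over X equilibria; $\mathrm{VoR}^{\mathrm{SC}}(\Gamma)=u_1(\mathrm{SC}(\mathrm{pr}_1(\Gamma)))/u_1(\mathrm{SC}(\Gamma))$. *)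

theory Defs
  imports Complex_Main
begin

text \<open>Nodes are histories (lists of actions)
  of a finite prefix-closed tree; the root is the empty history.\<close>

record 'a efg =
  H :: "'a list set"
  P1 :: "'a list set"
  chance :: "'a list \<Rightarrow> 'a \<Rightarrow> real"
  util :: "'a list \<Rightarrow> real"
  infosets :: "'a list set set"

definition acts :: "'a efg \<Rightarrow> 'a list \<Rightarrow> 'a set" where
  "acts G h = {a. h @ [a] \<in> H G}"

definition leaves :: "'a efg \<Rightarrow> 'a list set" where
  "leaves G = {h \<in> H G. acts G h = {}}"

definition chance_nodes :: "'a efg \<Rightarrow> 'a list set" where
  "chance_nodes G = H G - leaves G - P1 G"

definition simplex :: "'a set \<Rightarrow> ('a \<Rightarrow> real) set" where
  "simplex A = {\<sigma>. (\<forall>a\<in>A. 0 \<le> \<sigma> a) \<and> sum \<sigma> A = 1}"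

text \<open>Action set of an infoset (common to all its nodes).\<close>
definition actsI :: "'a efg \<Rightarrow> 'a list set \<Rightarrow> 'a set" where
  "actsI G I = acts G (SOME h. h \<in> I)"

definition wf_game :: "'a efg \<Rightarrow> bool" where
  "wf_game G \<longleftrightarrow>
     finite (H G) \<and> [] \<in> H G \<and>
     (\<forall>h\<in>H G. \<forall>k. take k h \<in> H G) \<and>
     P1 G \<subseteq> H G - leaves G \<and>
     (\<forall>h\<in>chance_nodes G. chance G h \<in> simplex (acts G h)) \<and>
     (\<forall>z\<in>leaves G. 0 \<le> util G z) \<and>
     (\<forall>I\<in>infosets G. I \<noteq> {}) \<and>
     (\<forall>I\<in>infosets G. \<forall>J\<in>infosets G. I \<noteq> J \<longrightarrow> I \<inter> J = {}) \<and>
     \<Union>(infosets G) = P1 G \<and>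
     (\<forall>I\<in>infosets G. \<forall>h\<in>I. \<forall>h'\<in>I. acts G h = acts G h')"

definition infoset_of :: "'a efg \<Rightarrow> 'a list \<Rightarrow> 'a list set" where
  "infoset_of G g = (THE I. I \<in> infosets G \<and> g \<in> I)"

definition obs1 :: "'a efg \<Rightarrow> 'a list \<Rightarrow> ('a list set \<times> 'a) list" where
  "obs1 G h = map (\<lambda>k. (infoset_of G (take k h), h ! k))
                  (filter (\<lambda>k. take k h \<in> P1 G) [0..<length h])"

definition pr1 :: "'a efg \<Rightarrow> 'a efg" where
  "pr1 G = G\<lparr> infosets := (\<Union>I\<in>infosets G. (\<lambda>h0. {h \<in> I. obs1 G h = obs1 G h0}) ` I) \<rparr>"

type_synonym 'a strategy = "'a list set \<Rightarrow> 'a \<Rightarrow> real"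

definition strategies :: "'a efg \<Rightarrow> 'a strategy set" where
  "strategies G = {\<pi>. \<forall>I\<in>infosets G. \<pi> I \<in> simplex (actsI G I)}"

definition fully_mixed :: "'a efg \<Rightarrow> 'a strategy \<Rightarrow> bool" where
  "fully_mixed G \<pi> \<longleftrightarrow> (\<forall>I\<in>infosets G. \<forall>a\<in>actsI G I. 0 < \<pi> I a)"

definition reach :: "'a efg \<Rightarrow> 'a strategy \<Rightarrow> 'a list \<Rightarrow> real" where
  "reach G \<pi> h = (\<Prod>k<length h. (if take k h \<in> P1 G
                                   then \<pi> (infoset_of G (take k h)) (h ! k)
                                   else chance G (take k h) (h ! k)))"

definition U :: "'a efg \<Rightarrow> 'a strategy \<Rightarrow> real" where
  "U G \<pi> = (\<Sum>z\<in>leaves G. reach G \<pi> z * util G z)"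

definition dU :: "'a efg \<Rightarrow> 'a strategy \<Rightarrow> 'a list set \<Rightarrow> 'a \<Rightarrow> real" where
  "dU G \<pi> I a = (THE D. ((\<lambda>t. U G (\<pi>(I := (\<pi> I)(a := t)))) has_real_derivative D) (at (\<pi> I a)))"

definition first_nodes :: "'a list set \<Rightarrow> 'a list set" where
  "first_nodes I = {h \<in> I. \<forall>k<length h. take k h \<notin> I}"

definition probI :: "'a efg \<Rightarrow> 'a strategy \<Rightarrow> 'a list set \<Rightarrow> real" where
  "probI G \<pi> I = (\<Sum>h\<in>first_nodes I. reach G \<pi> h)"

definition Fr :: "'a efg \<Rightarrow> 'a strategy \<Rightarrow> 'a list set \<Rightarrow> real" where
  "Fr G \<pi> I = (\<Sum>h\<in>I. reach G \<pi> h)"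

definition U_CDT :: "'a efg \<Rightarrow> ('a \<Rightarrow> real) \<Rightarrow> 'a strategy \<Rightarrow> 'a list set \<Rightarrow> real" where
  "U_CDT G \<sigma> \<pi> I = U G \<pi> + (\<Sum>a\<in>actsI G I. (\<sigma> a - \<pi> I a) * dU G \<pi> I a)"

definition EDT_eq :: "'a efg \<Rightarrow> 'a strategy \<Rightarrow> bool" where
  "EDT_eq G \<pi> \<longleftrightarrow> \<pi> \<in> strategies G \<and>
     (\<forall>I\<in>infosets G. \<forall>\<sigma>\<in>simplex (actsI G I). U G (\<pi>(I := \<sigma>)) \<le> U G \<pi>)"

text \<open>KKT point of maximizing U over the product of simplices (Lagrange multipliers
  lam for the equality constraints, mu >= 0 for the nonnegativity constraints).\<close>
definition CDT_eq :: "'a efg \<Rightarrow> 'a strategy \<Rightarrow> bool" where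
  "CDT_eq G \<pi> \<longleftrightarrow> \<pi> \<in> strategies G \<and>
     (\<exists>lam mu. \<forall>I\<in>infosets G. \<forall>a\<in>actsI G I.
         0 \<le> mu I a \<and> mu I a * \<pi> I a = 0 \<and> dU G \<pi> I a + mu I a = lam I)"

definition converges_to :: "'a efg \<Rightarrow> (nat \<Rightarrow> 'a strategy) \<Rightarrow> 'a strategy \<Rightarrow> bool" where
  "converges_to G \<pi>s \<pi> \<longleftrightarrow>
     (\<forall>I\<in>infosets G. \<forall>a\<in>actsI G I. (\<lambda>k. \<pi>s k I a) \<longlonglongrightarrow> \<pi> I a)"

definition EDT_rational :: "'a efg \<Rightarrow> 'a strategy \<Rightarrow> bool" where
  "EDT_rational G \<pi> \<longleftrightarrow> \<pi> \<in> strategies G \<and>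
     (\<exists>\<pi>s \<epsilon>. (\<forall>k. \<pi>s k \<in> strategies G \<and> fully_mixed G (\<pi>s k)) \<and>
        converges_to G \<pi>s \<pi> \<and> (\<forall>k. 0 < \<epsilon> k) \<and> \<epsilon> \<longlonglongrightarrow> 0 \<and>
        (\<forall>k. \<forall>I\<in>infosets G. 0 < probI G (\<pi>s k) I \<longrightarrow>
           (\<forall>\<sigma>\<in>simplex (actsI G I).
              (U G ((\<pi>s k)(I := \<sigma>)) - U G (\<pi>s k)) / probI G (\<pi>s k) I \<le> \<epsilon> k)))"

definition CDT_rational :: "'a efg \<Rightarrow> 'a strategy \<Rightarrow> bool" where
  "CDT_rational G \<pi> \<longleftrightarrow> \<pi> \<in> strategies G \<and>
     (\<exists>\<pi>s \<epsilon>. (\<forall>k. \<pi>s k \<in> strategies G \<and> fully_mixed G (\<pi>s k)) \<and>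
        converges_to G \<pi>s \<pi> \<and> (\<forall>k. 0 < \<epsilon> k) \<and> \<epsilon> \<longlonglongrightarrow> 0 \<and>
        (\<forall>k. \<forall>I\<in>infosets G. 0 < Fr G (\<pi>s k) I \<longrightarrow>
           (\<forall>\<sigma>\<in>simplex (actsI G I).
              (U_CDT G \<sigma> (\<pi>s k) I - U G (\<pi>s k)) / Fr G (\<pi>s k) I \<le> \<epsilon> k)))"

definition realization_equiv :: "'a efg \<Rightarrow> 'a strategy \<Rightarrow> 'a strategy \<Rightarrow> bool" where
  "realization_equiv G \<pi> \<pi>' \<longleftrightarrow> (\<forall>h\<in>H G. reach G \<pi> h = reach G \<pi>' h)"

definition EDT_Nash :: "'a efg \<Rightarrow> 'a strategy set" where
  "EDT_Nash G = {\<pi>. EDT_eq G \<pi> \<and> (\<exists>\<pi>'. EDT_rational G \<pi>' \<and> realization_equiv G \<pi> \<pi>')}"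

definition CDT_Nash :: "'a efg \<Rightarrow> 'a strategy set" where
  "CDT_Nash G = {\<pi>. CDT_eq G \<pi> \<and> (\<exists>\<pi>'. CDT_rational G \<pi>' \<and> realization_equiv G \<pi> \<pi>')}"

definition best_val :: "'a efg \<Rightarrow> 'a strategy set \<Rightarrow> real" where
  "best_val G S = Sup (U G ` S)"

definition worst_val :: "'a efg \<Rightarrow> 'a strategy set \<Rightarrow> real" where
  "worst_val G S = Inf (U G ` S)"

end

theory Submission
  imports Defs
begin

definition fac :: "'a efg \<Rightarrow> 'a strategy \<Rightarrow> 'a list \<Rightarrow> nat \<Rightarrow> real" where
  "fac G \<pi> h k = (if take k h \<in> P1 G then \<pi> (infoset_of G (take k h)) (h ! k)
                   else chance G (take k h) (h ! k))"

lemma reach_fac: "reach G \<pi> h = (\<Prod>k<length h. fac G \<pi> h k)"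
  unfolding reach_def fac_def by simp

lemma U_fac: "U G \<pi> = (\<Sum>z\<in>leaves G. (\<Prod>k<length z. fac G \<pi> z k) * util G z)"
  unfolding U_def reach_fac by simp

lemma fac_prefix: "k < j \<Longrightarrow> fac G \<pi> (take j z) k = fac G \<pi> z k"
  unfolding fac_def by (simp add: min_def)

lemma reach_prefix: "j \<le> length z \<Longrightarrow> reach G \<pi> (take j z) = (\<Prod>k<j. fac G \<pi> z k)"
proof -
  assume "j \<le> length z"
  then have "length (take j z) = j" by simp
  then show ?thesis unfolding reach_fac by (simp add: fac_prefix)
qed

locale wfg =
  fixes G :: "'a efg"
  assumes wf: "wf_game G"
begin

lemma finH: "finite (H G)" using wf unfolding wf_game_def by simp
lemma rootH: "[] \<in> H G" using wf unfolding wf_game_def by simp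
lemma takeH: "h \<in> H G \<Longrightarrow> take k h \<in> H G" using wf unfolding wf_game_def by simp
lemma P1_sub: "P1 G \<subseteq> H G - leaves G" using wf unfolding wf_game_def by simp
lemma chance_simplex: "h \<in> chance_nodes G \<Longrightarrow> chance G h \<in> simplex (acts G h)"
  using wf unfolding wf_game_def by simp
lemma util_nonneg: "z \<in> leaves G \<Longrightarrow> 0 \<le> util G z" using wf unfolding wf_game_def by simp
lemma inf_ne: "I \<in> infosets G \<Longrightarrow> I \<noteq> {}" using wf unfolding wf_game_def by simp
lemma inf_disj: "I \<in> infosets G \<Longrightarrow> J \<in> infosets G \<Longrightarrow> I \<noteq> J \<Longrightarrow> I \<inter> J = {}"
  using wf unfolding wf_game_def by simp
lemma inf_union: "\<Union>(infosets G) = P1 G" using wf unfolding wf_game_def by simp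
lemma inf_acts: "I \<in> infosets G \<Longrightarrow> h \<in> I \<Longrightarrow> h' \<in> I \<Longrightarrow> acts G h = acts G h'"
  using wf unfolding wf_game_def by blast

lemma inf_subP1: "I \<in> infosets G \<Longrightarrow> I \<subseteq> P1 G"
  using inf_union by blast

lemma inf_subH: "I \<in> infosets G \<Longrightarrow> I \<subseteq> H G"
  using inf_subP1 P1_sub by blast

lemma fin_infosets: "finite (infosets G)"
  by (rule finite_subset[of _ "Pow (H G)"]) (use inf_subH finH in auto)

lemma fin_I: "I \<in> infosets G \<Longrightarrow> finite I"
  using inf_subH finH finite_subset by blast

lemma fin_leaves: "finite (leaves G)"
  using finH unfolding leaves_def by simp

lemma leavesH: "z \<in> leaves G \<Longrightarrow> z \<in> H G"
  unfolding leaves_def by simp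

lemma fin_acts: "finite (acts G h)"
proof -
  have "inj_on (\<lambda>a. h @ [a]) (acts G h)" by (auto simp: inj_on_def)
  moreover have "(\<lambda>a. h @ [a]) ` acts G h \<subseteq> H G" unfolding acts_def by auto
  ultimately show ?thesis using finH finite_imageD finite_subset by blast
qed

lemma infoset_of_eq: "I \<in> infosets G \<Longrightarrow> g \<in> I \<Longrightarrow> infoset_of G g = I"
  unfolding infoset_of_def using inf_disj by (intro the_equality) blast+

lemma infoset_of_in: "g \<in> P1 G \<Longrightarrow> infoset_of G g \<in> infosets G \<and> g \<in> infoset_of G g"
proof -
  assume "g \<in> P1 G"
  then obtain I where "I \<in> infosets G" "g \<in> I" using inf_union by blast
  then show ?thesis using infoset_of_eq by simp
qed

lemma actsI_eq: "I \<in> infosets G \<Longrightarrow> h \<in> I \<Longrightarrow> actsI G I = acts G h"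
proof -
  assume I: "I \<in> infosets G" and h: "h \<in> I"
  from h have "(SOME h. h \<in> I) \<in> I" by (rule someI)
  then show ?thesis unfolding actsI_def using inf_acts[OF I _ h] by blast
qed

lemma fin_actsI: "finite (actsI G I)"
  unfolding actsI_def by (rule fin_acts)

lemma act_prefix: "h \<in> H G \<Longrightarrow> k < length h \<Longrightarrow> h ! k \<in> acts G (take k h)"
  unfolding acts_def using takeH[of h "Suc k"] by (simp add: take_Suc_conv_app_nth)

lemma nonleaf_prefix: "h \<in> H G \<Longrightarrow> k < length h \<Longrightarrow> take k h \<in> H G - leaves G"
  using act_prefix[of h k] takeH[of h k] unfolding leaves_def by auto

lemma actsI_ne: "I \<in> infosets G \<Longrightarrow> actsI G I \<noteq> {}"
proof -
  assume I: "I \<in> infosets G"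
  then obtain h where h: "h \<in> I" using inf_ne by blast
  then have "h \<in> H G - leaves G" using I inf_subP1 P1_sub by blast
  then show ?thesis using actsI_eq[OF I h] unfolding leaves_def by auto
qed

lemma simplex_le1: "\<sigma> \<in> simplex A \<Longrightarrow> finite A \<Longrightarrow> a \<in> A \<Longrightarrow> \<sigma> a \<le> 1"
  unfolding simplex_def using member_le_sum[of a A \<sigma>] by auto

lemma simplex_ge0: "\<sigma> \<in> simplex A \<Longrightarrow> a \<in> A \<Longrightarrow> 0 \<le> \<sigma> a"
  unfolding simplex_def by auto

lemma fac_bounds:
  assumes \<pi>: "\<pi> \<in> strategies G" and z: "z \<in> H G" and k: "k < length z"
  shows "0 \<le> fac G \<pi> z k \<and> fac G \<pi> z k \<le> 1"
proof (cases "take k z \<in> P1 G")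
  case True
  let ?I = "infoset_of G (take k z)"
  have I: "?I \<in> infosets G" "take k z \<in> ?I" using infoset_of_in[OF True] by auto
  have a: "z ! k \<in> actsI G ?I" using actsI_eq[OF I] act_prefix[OF z k] by simp
  have "\<pi> ?I \<in> simplex (actsI G ?I)" using \<pi> I unfolding strategies_def by auto
  then have "0 \<le> \<pi> ?I (z ! k) \<and> \<pi> ?I (z ! k) \<le> 1"
    using simplex_le1[OF _ fin_actsI a] simplex_ge0[OF _ a] by blast
  then show ?thesis using True unfolding fac_def by simp
next
  case False
  then have "take k z \<in> chance_nodes G" using nonleaf_prefix[OF z k] unfolding chance_nodes_def by auto
  then have "chance G (take k z) \<in> simplex (acts G (take k z))" by (rule chance_simplex)
  then have "0 \<le> chance G (take k z) (z ! k) \<and> chance G (take k z) (z ! k) \<le> 1"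
    using simplex_le1[OF _ fin_acts act_prefix[OF z k]] simplex_ge0[OF _ act_prefix[OF z k]] by blast
  then show ?thesis using False unfolding fac_def by simp
qed

lemma fac_upd:
  assumes I: "I \<in> infosets G"
  shows "fac G (\<pi>(I := x)) z k = (if take k z \<in> I then x (z ! k) else fac G \<pi> z k)"
proof (cases "take k z \<in> P1 G")
  case True
  then show ?thesis using infoset_of_in[OF True] infoset_of_eq[OF I] unfolding fac_def by auto
next
  case False
  then show ?thesis using inf_subP1[OF I] unfolding fac_def by auto
qed

lemma U_upd:
  assumes I: "I \<in> infosets G"
  shows "U G (\<pi>(I := x)) = (\<Sum>z\<in>leaves G.
      (\<Prod>k<length z. (if take k z \<in> I then x (z ! k) else fac G \<pi> z k)) * util G z)"
  unfolding U_fac fac_upd[OF I] ..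

lemma fac_cong:
  assumes "\<forall>J\<in>infosets G. \<pi> J = \<pi>' J"
  shows "fac G \<pi> z k = fac G \<pi>' z k"
  using assms infoset_of_in unfolding fac_def by auto

lemma U_cong:
  assumes "\<forall>J\<in>infosets G. \<pi> J = \<pi>' J"
  shows "U G \<pi> = U G \<pi>'"
  unfolding U_fac using fac_cong[OF assms] by simp

lemma reach_bounds:
  assumes "\<pi> \<in> strategies G" "h \<in> H G"
  shows "0 \<le> reach G \<pi> h \<and> reach G \<pi> h \<le> 1"
  unfolding reach_fac using fac_bounds[OF assms]
  by (auto intro!: prod_nonneg prod_le_1)

lemma U_nonneg: "\<pi> \<in> strategies G \<Longrightarrow> 0 \<le> U G \<pi>"
  unfolding U_def using reach_bounds leavesH util_nonneg by (auto intro!: sum_nonneg)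

lemma U_le: "\<pi> \<in> strategies G \<Longrightarrow> U G \<pi> \<le> (\<Sum>z\<in>leaves G. util G z)"
  unfolding U_def using reach_bounds leavesH util_nonneg
  by (auto intro!: sum_mono mult_left_le_one_le)

end



lemma DERIV_prod_affine:
  fixes \<alpha> \<beta> :: "nat \<Rightarrow> real"
  assumes "finite K"
  shows "((\<lambda>t. \<Prod>k\<in>K. \<alpha> k + t * \<beta> k) has_real_derivative
           (\<Sum>j\<in>K. \<beta> j * (\<Prod>k\<in>K-{j}. \<alpha> k + t * \<beta> k))) (at t)"
  using assms
proof (induction K rule: finite_induct)
  case empty
  then show ?case by simp
next
  case (insert x F)
  have d1: "((\<lambda>t. \<alpha> x + t * \<beta> x) has_real_derivative \<beta> x) (at t)"
    by (auto intro!: derivative_eq_intros)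
  have "((\<lambda>t. (\<alpha> x + t * \<beta> x) * (\<Prod>k\<in>F. \<alpha> k + t * \<beta> k)) has_real_derivative
     (\<alpha> x + t * \<beta> x) * (\<Sum>j\<in>F. \<beta> j * (\<Prod>k\<in>F-{j}. \<alpha> k + t * \<beta> k)) + \<beta> x * (\<Prod>k\<in>F. \<alpha> k + t * \<beta> k)) (at t)"
    using DERIV_mult'[OF d1 insert.IH] by simp
  moreover have "(\<Sum>j\<in>insert x F. \<beta> j * (\<Prod>k\<in>insert x F-{j}. \<alpha> k + t * \<beta> k)) =
     (\<alpha> x + t * \<beta> x) * (\<Sum>j\<in>F. \<beta> j * (\<Prod>k\<in>F-{j}. \<alpha> k + t * \<beta> k)) + \<beta> x * (\<Prod>k\<in>F. \<alpha> k + t * \<beta> k)"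
  proof -
    have "\<And>j. j \<in> F \<Longrightarrow> insert x F - {j} = insert x (F - {j})" using insert by auto
    then have "(\<Sum>j\<in>F. \<beta> j * (\<Prod>k\<in>insert x F-{j}. \<alpha> k + t * \<beta> k)) =
       (\<Sum>j\<in>F. \<beta> j * ((\<alpha> x + t * \<beta> x) * (\<Prod>k\<in>F-{j}. \<alpha> k + t * \<beta> k)))"
      using insert by (intro sum.cong) (auto simp: prod.insert)
    then show ?thesis using insert
      by (simp add: sum_distrib_left insert_Diff_if algebra_simps)
  qed
  ultimately show ?case by (simp only: prod.insert[OF insert(1,2)])
qed

definition dUf :: "'a efg \<Rightarrow> 'a strategy \<Rightarrow> 'a list set \<Rightarrow> 'a \<Rightarrow> real" where
  "dUf G \<pi> I a = (\<Sum>z\<in>leaves G. (\<Sum>j<length z. if take j z \<in> I \<and> z ! j = a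
        then (\<Prod>k\<in>{..<length z}-{j}. fac G \<pi> z k) else 0) * util G z)"

context wfg
begin

lemma dU_eq:
  assumes I: "I \<in> infosets G"
  shows "dU G \<pi> I a = dUf G \<pi> I a"
proof -
  define \<alpha> where "\<alpha> z k = (if take k z \<in> I \<and> z ! k = a then 0 else fac G \<pi> z k)" for z k
  define \<beta> :: "'a list \<Rightarrow> nat \<Rightarrow> real" where "\<beta> z k = (if take k z \<in> I \<and> z ! k = a then 1 else 0)" for z k
  have facI: "take k z \<in> I \<Longrightarrow> fac G \<pi> z k = \<pi> I (z ! k)" for z k
    using fac_upd[OF I, of \<pi> "\<pi> I" z k] by simp
  have eq: "U G (\<pi>(I := (\<pi> I)(a := t))) = (\<Sum>z\<in>leaves G. (\<Prod>k<length z. \<alpha> z k + t * \<beta> z k) * util G z)" for t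
    unfolding U_upd[OF I] \<alpha>_def \<beta>_def by (intro sum.cong refl arg_cong2[where f=times] prod.cong) (auto simp: facI)
  have at: "\<alpha> z k + \<pi> I a * \<beta> z k = fac G \<pi> z k" for z k
    unfolding \<alpha>_def \<beta>_def using facI by auto
  have D: "((\<lambda>t. U G (\<pi>(I := (\<pi> I)(a := t)))) has_real_derivative dUf G \<pi> I a) (at (\<pi> I a))"
    unfolding eq dUf_def
    apply (rule DERIV_sum)
    apply (rule DERIV_cmult_right)
    apply (rule DERIV_prod_affine[THEN DERIV_cong])
     apply simp
    apply (intro sum.cong refl)
    apply (subst prod.cong[OF refl at])
    apply (simp add: \<beta>_def)
    done
  show ?thesis unfolding dU_def using D DERIV_unique by blast
qed

end



lemma obs1_take:
  assumes "p \<le> length h"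
  shows "obs1 G (take p h) = map (\<lambda>k. (infoset_of G (take k h), h ! k))
                                  (filter (\<lambda>k. take k h \<in> P1 G) [0..<p])"
proof -
  have "filter (\<lambda>k. take k (take p h) \<in> P1 G) [0..<p] = filter (\<lambda>k. take k h \<in> P1 G) [0..<p]"
    by (rule filter_cong) (auto simp: min_def)
  moreover have "map (\<lambda>k. (infoset_of G (take k (take p h)), take p h ! k)) (filter (\<lambda>k. take k h \<in> P1 G) [0..<p])
     = map (\<lambda>k. (infoset_of G (take k h), h ! k)) (filter (\<lambda>k. take k h \<in> P1 G) [0..<p])"
    by (rule map_cong) (auto simp: min_def)
  ultimately show ?thesis unfolding obs1_def using assms by (simp add: min_def)
qed

lemma length_filter_upt_mono:
  assumes "j < k" "P j"
  shows "length (filter P [0..<j]) < length (filter P [0..<k])"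
proof -
  have "[0..<k] = [0..<j] @ [j..<k]" using upt_add_eq_append[of 0 j "k - j"] assms by simp
  moreover have "[j..<k] = j # [Suc j..<k]" using assms by (simp add: upt_conv_Cons)
  ultimately show ?thesis using assms by simp
qed

lemma ol_mono:
  assumes "j < k" "k \<le> length z" "take j z \<in> P1 G"
  shows "length (obs1 G (take j z)) < length (obs1 G (take k z))"
  using obs1_take[of j z G] obs1_take[of k z G] assms length_filter_upt_mono[of j k "\<lambda>k. take k z \<in> P1 G"]
  by simp

lemma prod_list_bounds:
  fixes xs :: "real list"
  shows "\<forall>x\<in>set xs. 0 \<le> x \<and> x \<le> 1 \<Longrightarrow> 0 \<le> prod_list xs \<and> prod_list xs \<le> 1"
  by (induction xs) (auto intro: mult_le_one)

lemma prod_list_pos: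
  fixes xs :: "real list"
  shows "\<forall>x\<in>set xs. 0 < x \<Longrightarrow> 0 < prod_list xs"
  by (induction xs) auto

definition cp :: "'a efg \<Rightarrow> 'a list \<Rightarrow> real" where
  "cp G h = (\<Prod>k\<in>{k. k < length h \<and> take k h \<notin> P1 G}. chance G (take k h) (h ! k))"

definition rho :: "'a strategy \<Rightarrow> ('a list set \<times> 'a) list \<Rightarrow> real" where
  "rho \<pi> os = prod_list (map (\<lambda>(J, a). \<pi> J a) os)"

lemma reach_split: "reach G \<pi> h = rho \<pi> (obs1 G h) * cp G h"
proof -
  let ?P = "\<lambda>k. take k h \<in> P1 G"
  have "reach G \<pi> h = (\<Prod>k\<in>{..<length h} \<inter> {k. ?P k}. \<pi> (infoset_of G (take k h)) (h ! k)) *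
        (\<Prod>k\<in>{..<length h} \<inter> - {k. ?P k}. chance G (take k h) (h ! k))"
    unfolding reach_def by (rule prod.If_cases) simp
  moreover have "{..<length h} \<inter> - {k. ?P k} = {k. k < length h \<and> take k h \<notin> P1 G}" by auto
  moreover have "rho \<pi> (obs1 G h) = (\<Prod>k\<in>{..<length h} \<inter> {k. ?P k}. \<pi> (infoset_of G (take k h)) (h ! k))"
  proof -
    have "rho \<pi> (obs1 G h) = prod_list (map (\<lambda>k. \<pi> (infoset_of G (take k h)) (h ! k)) (filter ?P [0..<length h]))"
      unfolding rho_def obs1_def by (simp add: comp_def)
    also have "\<dots> = (\<Prod>k\<in>set (filter ?P [0..<length h]). \<pi> (infoset_of G (take k h)) (h ! k))"
      by (rule prod.distinct_set_conv_list[symmetric]) simp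
    also have "set (filter ?P [0..<length h]) = {..<length h} \<inter> {k. ?P k}" by auto
    finally show ?thesis .
  qed
  ultimately show ?thesis unfolding cp_def by simp
qed

context wfg
begin

lemma obs1_entries:
  assumes "h \<in> H G" "(J, a) \<in> set (obs1 G h)"
  shows "J \<in> infosets G \<and> a \<in> actsI G J"
proof -
  from assms(2) obtain k where k: "k < length h" "take k h \<in> P1 G"
    "J = infoset_of G (take k h)" "a = h ! k"
    unfolding obs1_def by auto
  then have "J \<in> infosets G" "take k h \<in> J" using infoset_of_in by auto
  then show ?thesis using actsI_eq act_prefix[OF assms(1) k(1)] k by auto
qed

lemma rho_bounds:
  assumes "\<pi> \<in> strategies G" "h \<in> H G"
  shows "0 \<le> rho \<pi> (obs1 G h) \<and> rho \<pi> (obs1 G h) \<le> 1"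
proof -
  have "\<forall>x\<in>set (map (\<lambda>(J, a). \<pi> J a) (obs1 G h)). 0 \<le> x \<and> x \<le> 1"
  proof
    fix x assume "x \<in> set (map (\<lambda>(J, a). \<pi> J a) (obs1 G h))"
    then obtain J a where Ja: "(J, a) \<in> set (obs1 G h)" "x = \<pi> J a" by auto
    have J: "J \<in> infosets G" and a: "a \<in> actsI G J" using obs1_entries[OF assms(2) Ja(1)] by auto
    have s: "\<pi> J \<in> simplex (actsI G J)" using assms(1) J unfolding strategies_def by blast
    show "0 \<le> x \<and> x \<le> 1" unfolding Ja(2) using simplex_le1[OF s fin_actsI a] simplex_ge0[OF s a] by blast
  qed
  then show ?thesis unfolding rho_def by (rule prod_list_bounds)
qed

lemma rho_pos:
  assumes "fully_mixed G \<pi>" "h \<in> H G"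
  shows "0 < rho \<pi> (obs1 G h)"
proof -
  have "\<forall>x\<in>set (map (\<lambda>(J, a). \<pi> J a) (obs1 G h)). 0 < x"
    using obs1_entries[OF assms(2)] assms(1) unfolding fully_mixed_def by auto
  then show ?thesis unfolding rho_def by (rule prod_list_pos)
qed

lemma cp_bounds:
  assumes "h \<in> H G"
  shows "0 \<le> cp G h \<and> cp G h \<le> 1"
proof -
  have "\<And>k. k < length h \<Longrightarrow> take k h \<notin> P1 G \<Longrightarrow>
      0 \<le> chance G (take k h) (h ! k) \<and> chance G (take k h) (h ! k) \<le> 1"
  proof -
    fix k assume k: "k < length h" "take k h \<notin> P1 G"
    then have "take k h \<in> chance_nodes G" using nonleaf_prefix[OF assms k(1)] unfolding chance_nodes_def by auto
    then have "chance G (take k h) \<in> simplex (acts G (take k h))" by (rule chance_simplex)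
    then show "0 \<le> chance G (take k h) (h ! k) \<and> chance G (take k h) (h ! k) \<le> 1"
      using simplex_le1[OF _ fin_acts act_prefix[OF assms k(1)]] simplex_ge0[OF _ act_prefix[OF assms k(1)]] by blast
  qed
  then show ?thesis unfolding cp_def by (auto intro!: prod_nonneg prod_le_1)
qed

end



definition tail :: "'a efg \<Rightarrow> 'a strategy \<Rightarrow> 'a list \<Rightarrow> nat \<Rightarrow> real" where
  "tail G \<pi> z j = (\<Prod>k\<in>{Suc j..<length z}. fac G \<pi> z k)"

lemma prod_minus_split:
  assumes "j < length z"
  shows "(\<Prod>k\<in>{..<length z}-{j}. fac G \<pi> z k) = reach G \<pi> (take j z) * tail G \<pi> z j"
proof -
  have "{..<length z}-{j} = {..<j} \<union> {Suc j..<length z}" using assms by auto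
  moreover have "{..<j} \<inter> {Suc j..<length z} = {}" by auto
  ultimately have "(\<Prod>k\<in>{..<length z}-{j}. fac G \<pi> z k) =
     (\<Prod>k\<in>{..<j}. fac G \<pi> z k) * (\<Prod>k\<in>{Suc j..<length z}. fac G \<pi> z k)"
    by (simp add: prod.union_disjoint)
  then show ?thesis unfolding tail_def using reach_prefix[of j z G \<pi>] assms by simp
qed

lemma tendsto_if_const:
  fixes f :: "nat \<Rightarrow> real"
  shows "(c \<Longrightarrow> f \<longlonglongrightarrow> a) \<Longrightarrow> (\<lambda>n. if c then f n else 0) \<longlonglongrightarrow> (if c then a else 0)"
  by (cases c) auto

context wfg
begin

lemma dUf_swap:
  assumes I: "I \<in> infosets G"
  shows "(\<Sum>a\<in>actsI G I. d a * dUf G \<pi> I a) =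
    (\<Sum>z\<in>leaves G. (\<Sum>j<length z. if take j z \<in> I then d (z ! j) * (\<Prod>k\<in>{..<length z}-{j}. fac G \<pi> z k) else 0) * util G z)"
proof -
  have "(\<Sum>a\<in>actsI G I. d a * dUf G \<pi> I a) =
      (\<Sum>a\<in>actsI G I. \<Sum>z\<in>leaves G. d a * ((\<Sum>j<length z. if take j z \<in> I \<and> z ! j = a
        then (\<Prod>k\<in>{..<length z}-{j}. fac G \<pi> z k) else 0) * util G z))"
    unfolding dUf_def by (simp add: sum_distrib_left)
  also have "\<dots> = (\<Sum>z\<in>leaves G. \<Sum>a\<in>actsI G I. d a * ((\<Sum>j<length z. if take j z \<in> I \<and> z ! j = a
        then (\<Prod>k\<in>{..<length z}-{j}. fac G \<pi> z k) else 0) * util G z))"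
    by (rule sum.swap)
  also have "\<dots> = (\<Sum>z\<in>leaves G. (\<Sum>j<length z. if take j z \<in> I then d (z ! j) * (\<Prod>k\<in>{..<length z}-{j}. fac G \<pi> z k) else 0) * util G z)"
  proof (rule sum.cong[OF refl])
    fix z assume z: "z \<in> leaves G"
    have zH: "z \<in> H G" using z leavesH by blast
    let ?P = "\<lambda>j. (\<Prod>k\<in>{..<length z}-{j}. fac G \<pi> z k)"
    have "(\<Sum>a\<in>actsI G I. d a * ((\<Sum>j<length z. if take j z \<in> I \<and> z ! j = a
        then ?P j else 0) * util G z)) =
      (\<Sum>a\<in>actsI G I. \<Sum>j<length z. (if take j z \<in> I \<and> z ! j = a
        then d a * ?P j * util G z else 0))"
      unfolding sum_distrib_left sum_distrib_right by (intro sum.cong refl) simp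
    also have "\<dots> = (\<Sum>j<length z. \<Sum>a\<in>actsI G I. (if take j z \<in> I \<and> z ! j = a
        then d a * ?P j * util G z else 0))"
      by (rule sum.swap)
    also have "\<dots> = (\<Sum>j<length z. (if take j z \<in> I then d (z ! j) * ?P j else 0) * util G z)"
    proof (rule sum.cong[OF refl])
      fix j assume j: "j \<in> {..<length z}"
      show "(\<Sum>a\<in>actsI G I. (if take j z \<in> I \<and> z ! j = a
        then d a * ?P j * util G z else 0)) =
        (if take j z \<in> I then d (z ! j) * ?P j else 0) * util G z"
      proof (cases "take j z \<in> I")
        case True
        have "z ! j \<in> actsI G I" using actsI_eq[OF I True] act_prefix[OF zH] j by simp
        then show ?thesis using True fin_actsI by simp
      next
        case False
        then show ?thesis by simp
      qed
    qed
    also have "\<dots> = (\<Sum>j<length z. if take j z \<in> I then d (z ! j) * ?P j else 0) * util G z"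
      by (simp add: sum_distrib_right)
    finally show "(\<Sum>a\<in>actsI G I. d a * ((\<Sum>j<length z. if take j z \<in> I \<and> z ! j = a
        then (\<Prod>k\<in>{..<length z}-{j}. fac G \<pi> z k) else 0) * util G z)) =
      (\<Sum>j<length z. if take j z \<in> I then d (z ! j) * (\<Prod>k\<in>{..<length z}-{j}. fac G \<pi> z k) else 0) * util G z" .
  qed
  finally show ?thesis .
qed

lemma fac_tendsto:
  assumes c: "converges_to G \<pi>s \<pi>" and z: "z \<in> H G" and k: "k < length z"
  shows "(\<lambda>n. fac G (\<pi>s n) z k) \<longlonglongrightarrow> fac G \<pi> z k"
proof (cases "take k z \<in> P1 G")
  case True
  let ?I = "infoset_of G (take k z)"
  have I: "?I \<in> infosets G" "take k z \<in> ?I" using infoset_of_in[OF True] by auto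
  have a: "z ! k \<in> actsI G ?I" using actsI_eq[OF I] act_prefix[OF z k] by simp
  have "(\<lambda>n. \<pi>s n ?I (z ! k)) \<longlonglongrightarrow> \<pi> ?I (z ! k)" using c I(1) a unfolding converges_to_def by blast
  then show ?thesis using True unfolding fac_def by simp
next
  case False
  then show ?thesis unfolding fac_def by simp
qed

lemma U_tendsto:
  assumes c: "converges_to G \<pi>s \<pi>"
  shows "(\<lambda>n. U G (\<pi>s n)) \<longlonglongrightarrow> U G \<pi>"
  unfolding U_fac
  by (intro tendsto_sum tendsto_mult tendsto_prod tendsto_const fac_tendsto[OF c])
     (auto simp: leavesH)

lemma dUf_tendsto:
  assumes c: "converges_to G \<pi>s \<pi>"
  shows "(\<lambda>n. dUf G (\<pi>s n) I a) \<longlonglongrightarrow> dUf G \<pi> I a"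
  unfolding dUf_def
  by (intro tendsto_sum tendsto_mult tendsto_prod tendsto_const tendsto_if_const fac_tendsto[OF c])
     (auto simp: leavesH)

end



definition olen :: "'a efg \<Rightarrow> 'a list set \<Rightarrow> nat" where
  "olen G I = length (obs1 G (SOME h. h \<in> I))"

locale prg = wfg +
  assumes PR: "I \<in> infosets G \<Longrightarrow> h \<in> I \<Longrightarrow> h' \<in> I \<Longrightarrow> obs1 G h = obs1 G h'"
begin

lemma olen_eq: "I \<in> infosets G \<Longrightarrow> h \<in> I \<Longrightarrow> olen G I = length (obs1 G h)"
proof -
  assume I: "I \<in> infosets G" and h: "h \<in> I"
  from h have "(SOME h. h \<in> I) \<in> I" by (rule someI)
  then show ?thesis unfolding olen_def using PR[OF I _ h] by simp
qed

lemma NA: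
  assumes I: "I \<in> infosets G" and "take j z \<in> I" "take k z \<in> I" "j < k" "k \<le> length z"
  shows False
proof -
  have "take j z \<in> P1 G" using assms(2) inf_subP1[OF I] by blast
  then have "length (obs1 G (take j z)) < length (obs1 G (take k z))"
    using ol_mono assms(4,5) by blast
  then show False using PR[OF I assms(2,3)] by simp
qed

lemma NA': "I \<in> infosets G \<Longrightarrow> take j z \<in> I \<Longrightarrow> take k z \<in> I \<Longrightarrow> j < length z \<Longrightarrow> k < length z \<Longrightarrow> j = k"
proof -
  assume a: "I \<in> infosets G" "take j z \<in> I" "take k z \<in> I" "j < length z" "k < length z"
  show "j = k"
  proof (rule ccontr)
    assume "j \<noteq> k"
    then have "j < k \<or> k < j" by arith
    then show False
    proof
      assume "j < k" then show False using NA[OF a(1) a(2) a(3)] a(5) by simp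
    next
      assume "k < j" then show False using NA[OF a(1) a(3) a(2)] a(4) by simp
    qed
  qed
qed

lemma first_nodes_eq: "I \<in> infosets G \<Longrightarrow> first_nodes I = I"
proof -
  assume I: "I \<in> infosets G"
  { fix h k assume "h \<in> I" "k < length h" "take k h \<in> I"
    then have False using NA[OF I, of k h "length h"] by simp }
  then show ?thesis unfolding first_nodes_def by blast
qed

lemma diffU:
  assumes I: "I \<in> infosets G"
  shows "U G (\<pi>(I := x)) - U G (\<pi>(I := y)) = (\<Sum>z\<in>leaves G.
      (\<Sum>j<length z. if take j z \<in> I then (x (z ! j) - y (z ! j)) * (\<Prod>k\<in>{..<length z}-{j}. fac G \<pi> z k) else 0) * util G z)"
proof -
  have "U G (\<pi>(I := x)) - U G (\<pi>(I := y)) = (\<Sum>z\<in>leaves G.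
      ((\<Prod>k<length z. (if take k z \<in> I then x (z ! k) else fac G \<pi> z k)) -
       (\<Prod>k<length z. (if take k z \<in> I then y (z ! k) else fac G \<pi> z k))) * util G z)"
    apply (subst U_upd[OF I])+
    apply (subst sum_subtractf[symmetric])
    apply (rule sum.cong[OF refl])
    apply (rule left_diff_distrib[symmetric])
    done
  also have "\<dots> = (\<Sum>z\<in>leaves G.
      (\<Sum>j<length z. if take j z \<in> I then (x (z ! j) - y (z ! j)) * (\<Prod>k\<in>{..<length z}-{j}. fac G \<pi> z k) else 0) * util G z)"
  proof (rule sum.cong[OF refl])
    fix z assume z: "z \<in> leaves G"
    show "((\<Prod>k<length z. (if take k z \<in> I then x (z ! k) else fac G \<pi> z k)) -
       (\<Prod>k<length z. (if take k z \<in> I then y (z ! k) else fac G \<pi> z k))) * util G z =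
       (\<Sum>j<length z. if take j z \<in> I then (x (z ! j) - y (z ! j)) * (\<Prod>k\<in>{..<length z}-{j}. fac G \<pi> z k) else 0) * util G z"
    proof (cases "\<exists>j<length z. take j z \<in> I")
      case True
      then obtain j where j: "j < length z" "take j z \<in> I" by blast
      have oth: "k \<in> {..<length z} - {j} \<Longrightarrow> take k z \<notin> I" for k
        using NA'[OF I j(2), of k] j(1) by auto
      have pr: "(\<Prod>k<length z. (if take k z \<in> I then w (z ! k) else fac G \<pi> z k)) =
          w (z ! j) * (\<Prod>k\<in>{..<length z}-{j}. fac G \<pi> z k)" for w
      proof -
        have "(\<Prod>k<length z. (if take k z \<in> I then w (z ! k) else fac G \<pi> z k)) =
          (if take j z \<in> I then w (z ! j) else fac G \<pi> z j) *
          (\<Prod>k\<in>{..<length z}-{j}. (if take k z \<in> I then w (z ! k) else fac G \<pi> z k))"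
          by (rule prod.remove) (use j(1) in auto)
        also have "(\<Prod>k\<in>{..<length z}-{j}. (if take k z \<in> I then w (z ! k) else fac G \<pi> z k)) =
           (\<Prod>k\<in>{..<length z}-{j}. fac G \<pi> z k)"
          using oth by (intro prod.cong) auto
        finally show ?thesis using j(2) by simp
      qed
      have sm: "(\<Sum>j'<length z. if take j' z \<in> I then (x (z ! j') - y (z ! j')) * (\<Prod>k\<in>{..<length z}-{j'}. fac G \<pi> z k) else 0)
         = (x (z ! j) - y (z ! j)) * (\<Prod>k\<in>{..<length z}-{j}. fac G \<pi> z k)"
      proof -
        have "(\<Sum>j'<length z. if take j' z \<in> I then (x (z ! j') - y (z ! j')) * (\<Prod>k\<in>{..<length z}-{j'}. fac G \<pi> z k) else 0)
          = (\<Sum>j'<length z. if j' = j then (x (z ! j') - y (z ! j')) * (\<Prod>k\<in>{..<length z}-{j'}. fac G \<pi> z k) else 0)"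
        proof (rule sum.cong[OF refl])
          fix j' assume j': "j' \<in> {..<length z}"
          show "(if take j' z \<in> I then (x (z ! j') - y (z ! j')) * (\<Prod>k\<in>{..<length z}-{j'}. fac G \<pi> z k) else 0) =
            (if j' = j then (x (z ! j') - y (z ! j')) * (\<Prod>k\<in>{..<length z}-{j'}. fac G \<pi> z k) else 0)"
          proof (cases "take j' z \<in> I")
            case True
            then have "j' = j" using NA'[OF I True j(2)] j' j(1) by simp
            then show ?thesis using True by simp
          next
            case False
            then have "j' \<noteq> j" using j(2) by blast
            then show ?thesis using False by simp
          qed
        qed
        then show ?thesis using j(1) by simp
      qed
      show ?thesis unfolding pr sm by (simp add: left_diff_distrib)
    next
      case False
      then have "(\<Prod>k<length z. (if take k z \<in> I then w (z ! k) else fac G \<pi> z k)) = (\<Prod>k<length z. fac G \<pi> z k)" for w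
        by (intro prod.cong) auto
      moreover have "(\<Sum>j<length z. if take j z \<in> I then (x (z ! j) - y (z ! j)) * (\<Prod>k\<in>{..<length z}-{j}. fac G \<pi> z k) else 0) = 0"
        using False by (intro sum.neutral) auto
      ultimately show ?thesis by simp
    qed
  qed
  finally show ?thesis .
qed


lemma reach_I:
  assumes I: "I \<in> infosets G" and h: "h \<in> I"
  shows "reach G \<pi> h = rho \<pi> (obs1 G (SOME h. h \<in> I)) * cp G h"
proof -
  from h have "(SOME h. h \<in> I) \<in> I" by (rule someI)
  then have "obs1 G (SOME h. h \<in> I) = obs1 G h" using PR[OF I] h by blast
  then show ?thesis using reach_split[of G \<pi> h] by simp
qed

lemma diffU2:
  assumes I: "I \<in> infosets G"
    and tl: "\<And>z j. z \<in> leaves G \<Longrightarrow> j < length z \<Longrightarrow> take j z \<in> I \<Longrightarrow> tail G \<pi> z j = tail G q z j"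
  shows "U G (\<pi>(I := x)) - U G (\<pi>(I := y)) = rho \<pi> (obs1 G (SOME h. h \<in> I)) *
    (\<Sum>z\<in>leaves G. (\<Sum>j<length z. if take j z \<in> I then (x (z ! j) - y (z ! j)) * (cp G (take j z) * tail G q z j) else 0) * util G z)"
proof -
  let ?r = "rho \<pi> (obs1 G (SOME h. h \<in> I))"
  have "U G (\<pi>(I := x)) - U G (\<pi>(I := y)) = (\<Sum>z\<in>leaves G.
      (\<Sum>j<length z. if take j z \<in> I then (x (z ! j) - y (z ! j)) * (\<Prod>k\<in>{..<length z}-{j}. fac G \<pi> z k) else 0) * util G z)"
    by (rule diffU[OF I])
  also have "\<dots> = (\<Sum>z\<in>leaves G. (\<Sum>j<length z. ?r * (if take j z \<in> I then (x (z ! j) - y (z ! j)) * (cp G (take j z) * tail G q z j) else 0)) * util G z)"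
  proof (intro sum.cong refl arg_cong2[where f=times])
    fix z j assume z: "z \<in> leaves G" and j: "j \<in> {..<length z}"
    show "(if take j z \<in> I then (x (z ! j) - y (z ! j)) * (\<Prod>k\<in>{..<length z}-{j}. fac G \<pi> z k) else 0) =
      ?r * (if take j z \<in> I then (x (z ! j) - y (z ! j)) * (cp G (take j z) * tail G q z j) else 0)"
    proof (cases "take j z \<in> I")
      case True
      have "(\<Prod>k\<in>{..<length z}-{j}. fac G \<pi> z k) = reach G \<pi> (take j z) * tail G \<pi> z j"
        using j by (intro prod_minus_split) simp
      also have "\<dots> = ?r * cp G (take j z) * tail G q z j"
        using reach_I[OF I True] tl[OF z _ True] j by simp
      finally show ?thesis using True by simp
    next
      case False
      then show ?thesis by simp
    qed
  qed
  also have "\<dots> = ?r * (\<Sum>z\<in>leaves G. (\<Sum>j<length z. if take j z \<in> I then (x (z ! j) - y (z ! j)) * (cp G (take j z) * tail G q z j) else 0) * util G z)"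
    by (simp only: sum_distrib_left[symmetric] mult.assoc)
  finally show ?thesis .
qed

lemma probI_eq:
  assumes I: "I \<in> infosets G"
  shows "probI G \<pi> I = rho \<pi> (obs1 G (SOME h. h \<in> I)) * (\<Sum>h\<in>I. cp G h)"
  unfolding probI_def first_nodes_eq[OF I] sum_distrib_left using reach_I[OF I] by simp

lemma step:
  assumes I: "I \<in> infosets G" and p: "p \<in> strategies G" and fm: "fully_mixed G p"
    and \<sigma>: "\<sigma> \<in> strategies G" and D: "D \<subseteq> infosets G" "I \<notin> D"
    and ol: "\<And>J. J \<in> D \<Longrightarrow> olen G J \<le> olen G I" and \<epsilon>: "0 \<le> \<epsilon>"
    and rat: "0 < probI G p I \<Longrightarrow> (U G (p(I := \<sigma> I)) - U G p) / probI G p I \<le> \<epsilon>"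
  shows "U G (\<lambda>J. if J \<in> insert I D then \<sigma> J else p J) - U G (\<lambda>J. if J \<in> D then \<sigma> J else p J) \<le> \<epsilon> * card I"
proof -
  define \<tau> where "\<tau> = (\<lambda>J. if J \<in> D then \<sigma> J else p J)"
  define h0 where "h0 = (SOME h. h \<in> I)"
  have h0: "h0 \<in> I" unfolding h0_def using inf_ne[OF I] by (simp add: some_in_eq)
  have h0H: "h0 \<in> H G" using h0 inf_subH[OF I] by blast
  have \<tau>I: "\<tau> I = p I" unfolding \<tau>_def using D by simp
  have e1: "(\<lambda>J. if J \<in> insert I D then \<sigma> J else p J) = \<tau>(I := \<sigma> I)" unfolding \<tau>_def by auto
  have e2: "\<tau> = \<tau>(I := p I)" using fun_upd_idem[of \<tau> I "p I"] \<tau>I by simp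
  have \<tau>s: "\<tau> \<in> strategies G" using p \<sigma> unfolding \<tau>_def strategies_def by auto
  define X where "X = (\<Sum>z\<in>leaves G. (\<Sum>j<length z. if take j z \<in> I then (\<sigma> I (z ! j) - p I (z ! j)) * (cp G (take j z) * tail G p z j) else 0) * util G z)"
  have tl: "tail G \<tau> z j = tail G p z j" if z: "z \<in> leaves G" and j: "j < length z" and zj: "take j z \<in> I" for z j
  proof -
    have "fac G \<tau> z k = fac G p z k" if k: "k \<in> {Suc j..<length z}" for k
    proof (cases "take k z \<in> P1 G")
      case True
      let ?J = "infoset_of G (take k z)"
      have J: "?J \<in> infosets G" "take k z \<in> ?J" using infoset_of_in[OF True] by auto
      have "?J \<notin> D"
      proof
        assume "?J \<in> D"
        then have "olen G ?J \<le> olen G I" by (rule ol)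
        moreover have "olen G ?J = length (obs1 G (take k z))" using olen_eq[OF J] .
        moreover have "olen G I = length (obs1 G (take j z))" using olen_eq[OF I zj] .
        moreover have "length (obs1 G (take j z)) < length (obs1 G (take k z))"
          using ol_mono[of j k z G] k zj inf_subP1[OF I] by auto
        ultimately show False by simp
      qed
      then show ?thesis using True unfolding fac_def \<tau>_def by simp
    next
      case False
      then show ?thesis unfolding fac_def by simp
    qed
    then show ?thesis unfolding tail_def by (rule prod.cong[OF refl])
  qed
  have d1: "U G (\<tau>(I := \<sigma> I)) - U G (\<tau>(I := p I)) = rho \<tau> (obs1 G h0) * X"
    unfolding X_def h0_def by (rule diffU2[OF I tl])
  have d2: "U G (p(I := \<sigma> I)) - U G (p(I := p I)) = rho p (obs1 G h0) * X"
    unfolding X_def h0_def by (rule diffU2[OF I]) simp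
  have pI: "probI G p I = rho p (obs1 G h0) * (\<Sum>h\<in>I. cp G h)"
    unfolding h0_def by (rule probI_eq[OF I])
  have rp: "0 < rho p (obs1 G h0)" by (rule rho_pos[OF fm h0H])
  have rt: "0 \<le> rho \<tau> (obs1 G h0) \<and> rho \<tau> (obs1 G h0) \<le> 1" by (rule rho_bounds[OF \<tau>s h0H])
  have cpb: "h \<in> I \<Longrightarrow> 0 \<le> cp G h \<and> cp G h \<le> 1" for h using cp_bounds inf_subH[OF I] by blast
  have Cle: "(\<Sum>h\<in>I. cp G h) \<le> card I"
    using sum_mono[of I "cp G" "\<lambda>_. 1"] cpb by simp
  have C0: "0 \<le> (\<Sum>h\<in>I. cp G h)" using cpb by (simp add: sum_nonneg)
  have "rho \<tau> (obs1 G h0) * X \<le> \<epsilon> * card I"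
  proof (cases "(\<Sum>h\<in>I. cp G h) = 0")
    case True
    then have "\<forall>h\<in>I. cp G h = 0" using sum_nonneg_eq_0_iff[OF fin_I[OF I]] cpb by blast
    then have "X = 0" unfolding X_def by (intro sum.neutral ballI) (simp add: sum.neutral)
    then show ?thesis using \<epsilon> by simp
  next
    case False
    then have Cp: "0 < (\<Sum>h\<in>I. cp G h)" using C0 by simp
    then have "0 < probI G p I" using pI rp by simp
    then have "(rho p (obs1 G h0) * X) / (rho p (obs1 G h0) * (\<Sum>h\<in>I. cp G h)) \<le> \<epsilon>"
      using rat d2 pI by simp
    then have "X / (\<Sum>h\<in>I. cp G h) \<le> \<epsilon>" using rp by simp
    then have XC: "X \<le> \<epsilon> * (\<Sum>h\<in>I. cp G h)" using Cp by (simp add: divide_le_eq)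
    have "rho \<tau> (obs1 G h0) * X \<le> \<epsilon> * (\<Sum>h\<in>I. cp G h)"
    proof (cases "X \<le> 0")
      case True
      then have "rho \<tau> (obs1 G h0) * X \<le> 0" using rt by (simp add: mult_nonneg_nonpos)
      then show ?thesis using \<epsilon> C0 by (smt (verit) mult_nonneg_nonneg)
    next
      case False
      then have "rho \<tau> (obs1 G h0) * X \<le> X" using rt by (simp add: mult_left_le_one_le)
      then show ?thesis using XC by simp
    qed
    also have "\<dots> \<le> \<epsilon> * card I" using Cle \<epsilon> by (simp add: mult_left_mono)
    finally show ?thesis .
  qed
  moreover have "U G (\<tau>(I := p I)) = U G \<tau>" using e2 by simp
  ultimately show ?thesis unfolding e1 using d1 unfolding \<tau>_def by simp
qed


lemma mix_bound:
  assumes p: "p \<in> strategies G" and fm: "fully_mixed G p" and \<sigma>: "\<sigma> \<in> strategies G" and \<epsilon>: "0 \<le> \<epsilon>"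
    and rat: "\<And>I. I \<in> infosets G \<Longrightarrow> 0 < probI G p I \<Longrightarrow> (U G (p(I := \<sigma> I)) - U G p) / probI G p I \<le> \<epsilon>"
  shows "U G \<sigma> \<le> U G p + \<epsilon> * (\<Sum>J\<in>infosets G. real (card J))"
proof -
  have main: "D \<subseteq> infosets G \<longrightarrow> U G (\<lambda>J. if J \<in> D then \<sigma> J else p J) - U G p \<le> \<epsilon> * (\<Sum>J\<in>D. real (card J))"
    if "finite D" for D
    using that
  proof (induction D rule: finite_ranking_induct[where f="olen G"])
    case empty
    then show ?case by simp
  next
    case (insert x S)
    show ?case
    proof
      assume sub: "insert x S \<subseteq> infosets G"
      show "U G (\<lambda>J. if J \<in> insert x S then \<sigma> J else p J) - U G p \<le> \<epsilon> * (\<Sum>J\<in>insert x S. real (card J))"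
      proof (cases "x \<in> S")
        case True
        then show ?thesis using insert sub by (simp add: insert_absorb)
      next
        case False
        have x: "x \<in> infosets G" using sub by blast
        have "U G (\<lambda>J. if J \<in> insert x S then \<sigma> J else p J) - U G (\<lambda>J. if J \<in> S then \<sigma> J else p J) \<le> \<epsilon> * card x"
          by (rule step[OF x p fm \<sigma> _ False insert(2) \<epsilon> rat[OF x]]) (use sub in auto)
        moreover have "U G (\<lambda>J. if J \<in> S then \<sigma> J else p J) - U G p \<le> \<epsilon> * (\<Sum>J\<in>S. real (card J))"
          using insert sub by blast
        moreover have "(\<Sum>J\<in>insert x S. real (card J)) = card x + (\<Sum>J\<in>S. real (card J))"
          using False insert(1) by simp
        ultimately show ?thesis by (simp add: distrib_left)
      qed
    qed
  qed
  have "U G \<sigma> = U G (\<lambda>J. if J \<in> infosets G then \<sigma> J else p J)" by (rule U_cong) simp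
  then show ?thesis using main[OF fin_infosets] by simp
qed

lemma UCDT_eq:
  assumes I: "I \<in> infosets G"
  shows "U_CDT G \<tau> \<pi> I = U G (\<pi>(I := \<tau>))"
proof -
  have "(\<Sum>a\<in>actsI G I. (\<tau> a - \<pi> I a) * dU G \<pi> I a) = (\<Sum>a\<in>actsI G I. (\<tau> a - \<pi> I a) * dUf G \<pi> I a)"
    using dU_eq[OF I] by simp
  also have "\<dots> = U G (\<pi>(I := \<tau>)) - U G (\<pi>(I := \<pi> I))"
    unfolding dUf_swap[OF I, of "\<lambda>a. \<tau> a - \<pi> I a"] diffU[OF I] ..
  finally show ?thesis unfolding U_CDT_def by simp
qed

lemma Fr_eq: "I \<in> infosets G \<Longrightarrow> Fr G \<pi> I = probI G \<pi> I"
  unfolding Fr_def probI_def using first_nodes_eq by simp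

lemma real_equiv_U: "realization_equiv G \<pi> \<pi>' \<Longrightarrow> U G \<pi> = U G \<pi>'"
  unfolding realization_equiv_def U_def using leavesH by simp

lemma limit_bound:
  assumes "\<And>k. a \<le> X k + e k * C" "X \<longlonglongrightarrow> x" "e \<longlonglongrightarrow> 0"
  shows "a \<le> (x :: real)"
proof -
  have "(\<lambda>k. X k + e k * C) \<longlonglongrightarrow> x + 0 * C" by (intro tendsto_intros assms)
  then show ?thesis using assms(1) by (intro LIMSEQ_le_const) auto
qed

lemma EDT_opt:
  assumes \<pi>: "\<pi> \<in> EDT_Nash G" and \<sigma>: "\<sigma> \<in> strategies G"
  shows "U G \<sigma> \<le> U G \<pi>"
proof -
  obtain \<pi>' where r: "EDT_rational G \<pi>'" and re: "realization_equiv G \<pi> \<pi>'"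
    using \<pi> unfolding EDT_Nash_def by blast
  obtain \<pi>s \<epsilon> where s: "\<And>k. \<pi>s k \<in> strategies G \<and> fully_mixed G (\<pi>s k)"
    and c: "converges_to G \<pi>s \<pi>'" and ep: "\<And>k. 0 < \<epsilon> k" and e0: "\<epsilon> \<longlonglongrightarrow> 0"
    and b: "\<And>k I \<sigma>'. I \<in> infosets G \<Longrightarrow> 0 < probI G (\<pi>s k) I \<Longrightarrow> \<sigma>' \<in> simplex (actsI G I) \<Longrightarrow>
       (U G ((\<pi>s k)(I := \<sigma>')) - U G (\<pi>s k)) / probI G (\<pi>s k) I \<le> \<epsilon> k"
    using r unfolding EDT_rational_def by blast
  have "U G \<sigma> \<le> U G (\<pi>s k) + \<epsilon> k * (\<Sum>J\<in>infosets G. real (card J))" for k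
  proof (rule mix_bound[OF conjunct1[OF s[of k]] conjunct2[OF s[of k]] \<sigma> less_imp_le[OF ep[of k]]])
    fix I assume I: "I \<in> infosets G" and pos: "0 < probI G (\<pi>s k) I"
    have "\<sigma> I \<in> simplex (actsI G I)" using \<sigma> I unfolding strategies_def by blast
    then show "(U G ((\<pi>s k)(I := \<sigma> I)) - U G (\<pi>s k)) / probI G (\<pi>s k) I \<le> \<epsilon> k"
      by (rule b[OF I pos])
  qed
  then have "U G \<sigma> \<le> U G \<pi>'" by (rule limit_bound[OF _ U_tendsto[OF c] e0])
  then show ?thesis using real_equiv_U[OF re] by simp
qed

lemma CDT_opt:
  assumes \<pi>: "\<pi> \<in> CDT_Nash G" and \<sigma>: "\<sigma> \<in> strategies G"
  shows "U G \<sigma> \<le> U G \<pi>"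
proof -
  obtain \<pi>' where r: "CDT_rational G \<pi>'" and re: "realization_equiv G \<pi> \<pi>'"
    using \<pi> unfolding CDT_Nash_def by blast
  obtain \<pi>s \<epsilon> where s: "\<And>k. \<pi>s k \<in> strategies G \<and> fully_mixed G (\<pi>s k)"
    and c: "converges_to G \<pi>s \<pi>'" and ep: "\<And>k. 0 < \<epsilon> k" and e0: "\<epsilon> \<longlonglongrightarrow> 0"
    and b: "\<And>k I \<sigma>'. I \<in> infosets G \<Longrightarrow> 0 < Fr G (\<pi>s k) I \<Longrightarrow> \<sigma>' \<in> simplex (actsI G I) \<Longrightarrow>
       (U_CDT G \<sigma>' (\<pi>s k) I - U G (\<pi>s k)) / Fr G (\<pi>s k) I \<le> \<epsilon> k"
    using r unfolding CDT_rational_def by blast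
  have b': "(U G ((\<pi>s k)(I := \<sigma>')) - U G (\<pi>s k)) / probI G (\<pi>s k) I \<le> \<epsilon> k"
    if "I \<in> infosets G" "0 < probI G (\<pi>s k) I" "\<sigma>' \<in> simplex (actsI G I)" for k I \<sigma>'
    using b[OF that(1) _ that(3), of k] that(2) Fr_eq[OF that(1)] UCDT_eq[OF that(1)] by simp
  have "U G \<sigma> \<le> U G (\<pi>s k) + \<epsilon> k * (\<Sum>J\<in>infosets G. real (card J))" for k
  proof (rule mix_bound[OF conjunct1[OF s[of k]] conjunct2[OF s[of k]] \<sigma> less_imp_le[OF ep[of k]]])
    fix I assume I: "I \<in> infosets G" and pos: "0 < probI G (\<pi>s k) I"
    have "\<sigma> I \<in> simplex (actsI G I)" using \<sigma> I unfolding strategies_def by blast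
    then show "(U G ((\<pi>s k)(I := \<sigma> I)) - U G (\<pi>s k)) / probI G (\<pi>s k) I \<le> \<epsilon> k"
      by (rule b'[OF I pos])
  qed
  then have "U G \<sigma> \<le> U G \<pi>'" by (rule limit_bound[OF _ U_tendsto[OF c] e0])
  then show ?thesis using real_equiv_U[OF re] by simp
qed

end



lemma filter_upt_nth:
  "i < length (filter P [0..<n]) \<Longrightarrow> filter P [0..<(filter P [0..<n]) ! i] = take i (filter P [0..<n])"
proof (induction n)
  case 0
  then show ?case by simp
next
  case (Suc n)
  let ?xs = "filter P [0..<n]"
  show ?case
  proof (cases "i < length ?xs")
    case True
    have "filter P [0..<Suc n] ! i = ?xs ! i" using True by (simp add: nth_append)
    moreover have "take i (filter P [0..<Suc n]) = take i ?xs" using True by simp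
    ultimately show ?thesis using Suc.IH[OF True] by simp
  next
    case False
    then have Pn: "P n" and i: "i = length ?xs" using Suc.prems by (auto split: if_splits)
    then have "filter P [0..<Suc n] ! i = n" by (simp add: nth_append)
    moreover have "take i (filter P [0..<Suc n]) = ?xs" using Pn i by simp
    ultimately show ?thesis by simp
  qed
qed

lemma pr1_simps [simp]:
  "H (pr1 G) = H G" "P1 (pr1 G) = P1 G" "chance (pr1 G) = chance G" "util (pr1 G) = util G"
  "infosets (pr1 G) = (\<Union>I\<in>infosets G. (\<lambda>h0. {h \<in> I. obs1 G h = obs1 G h0}) ` I)"
  unfolding pr1_def by simp_all

lemma pr1_acts [simp]: "acts (pr1 G) = acts G"
  unfolding acts_def[abs_def] by simp

lemma pr1_leaves [simp]: "leaves (pr1 G) = leaves G"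
  unfolding leaves_def by simp

lemma pr1_chance_nodes [simp]: "chance_nodes (pr1 G) = chance_nodes G"
  unfolding chance_nodes_def by simp

context wfg
begin

lemma pr1_infosetsE:
  assumes "J \<in> infosets (pr1 G)"
  obtains I h0 where "I \<in> infosets G" "h0 \<in> I" "J = {h \<in> I. obs1 G h = obs1 G h0}"
  using assms by auto

lemma wf_pr1: "wf_game (pr1 G)"
proof -
  have a: "\<forall>J\<in>infosets (pr1 G). J \<noteq> {}"
  proof
    fix J assume "J \<in> infosets (pr1 G)"
    then obtain I h0 where "I \<in> infosets G" "h0 \<in> I" "J = {h \<in> I. obs1 G h = obs1 G h0}"
      by (rule pr1_infosetsE)
    then have "h0 \<in> J" by simp
    then show "J \<noteq> {}" by blast
  qed
  have b: "\<forall>J1\<in>infosets (pr1 G). \<forall>J2\<in>infosets (pr1 G). J1 \<noteq> J2 \<longrightarrow> J1 \<inter> J2 = {}"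
  proof (intro ballI impI)
    fix J1 J2 assume J1: "J1 \<in> infosets (pr1 G)" and J2: "J2 \<in> infosets (pr1 G)" and ne: "J1 \<noteq> J2"
    obtain I1 h1 where 1: "I1 \<in> infosets G" "h1 \<in> I1" "J1 = {h \<in> I1. obs1 G h = obs1 G h1}"
      using J1 by (rule pr1_infosetsE)
    obtain I2 h2 where 2: "I2 \<in> infosets G" "h2 \<in> I2" "J2 = {h \<in> I2. obs1 G h = obs1 G h2}"
      using J2 by (rule pr1_infosetsE)
    show "J1 \<inter> J2 = {}"
    proof (rule ccontr)
      assume "J1 \<inter> J2 \<noteq> {}"
      then obtain g where g: "g \<in> I1" "g \<in> I2" "obs1 G g = obs1 G h1" "obs1 G g = obs1 G h2"
        using 1 2 by blast
      then have "I1 = I2" using inf_disj[OF 1(1) 2(1)] by blast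
      then have "J1 = J2" using 1 2 g by simp
      then show False using ne by simp
    qed
  qed
  have c: "\<Union>(infosets (pr1 G)) = P1 (pr1 G)"
  proof
    show "\<Union>(infosets (pr1 G)) \<subseteq> P1 (pr1 G)" using inf_subP1 by auto
  next
    show "P1 (pr1 G) \<subseteq> \<Union>(infosets (pr1 G))"
    proof
      fix g assume "g \<in> P1 (pr1 G)"
      then have "g \<in> P1 G" by simp
      then obtain I where I: "I \<in> infosets G" "g \<in> I" using inf_union by blast
      then have "{h \<in> I. obs1 G h = obs1 G g} \<in> infosets (pr1 G)" by auto
      moreover have "g \<in> {h \<in> I. obs1 G h = obs1 G g}" using I by simp
      ultimately show "g \<in> \<Union>(infosets (pr1 G))" by blast
    qed
  qed
  have d: "\<forall>J\<in>infosets (pr1 G). \<forall>h\<in>J. \<forall>h'\<in>J. acts (pr1 G) h = acts (pr1 G) h'"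
  proof (intro ballI)
    fix J h h' assume J: "J \<in> infosets (pr1 G)" and h: "h \<in> J" and h': "h' \<in> J"
    obtain I h0 where I: "I \<in> infosets G" "h0 \<in> I" "J = {h \<in> I. obs1 G h = obs1 G h0}"
      using J by (rule pr1_infosetsE)
    have hI: "h \<in> I" and hI': "h' \<in> I" using h h' I(3) by auto
    show "acts (pr1 G) h = acts (pr1 G) h'" using inf_acts[OF I(1) hI hI'] by simp
  qed
  have e1: "finite (H (pr1 G))" "[] \<in> H (pr1 G)" "\<forall>h\<in>H (pr1 G). \<forall>k. take k h \<in> H (pr1 G)"
    "P1 (pr1 G) \<subseteq> H (pr1 G) - leaves (pr1 G)"
    using finH rootH takeH P1_sub by simp_all
  have e2: "\<forall>h\<in>chance_nodes (pr1 G). chance (pr1 G) h \<in> simplex (acts (pr1 G) h)"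
    "\<forall>z\<in>leaves (pr1 G). 0 \<le> util (pr1 G) z"
    using chance_simplex util_nonneg by simp_all
  show ?thesis unfolding wf_game_def
    by (intro conjI; (rule e1 e2 a b c d)?)
qed

lemma infoset_of_pr1:
  assumes g: "g \<in> P1 G"
  shows "infoset_of (pr1 G) g = {h \<in> infoset_of G g. obs1 G h = obs1 G g}"
proof -
  interpret P: wfg "pr1 G" by (rule wfg.intro[OF wf_pr1])
  have I: "infoset_of G g \<in> infosets G" "g \<in> infoset_of G g" using infoset_of_in[OF g] by simp_all
  then have "{h \<in> infoset_of G g. obs1 G h = obs1 G g} \<in> infosets (pr1 G)" by auto
  moreover have "g \<in> {h \<in> infoset_of G g. obs1 G h = obs1 G g}" using I by simp
  ultimately show ?thesis by (rule P.infoset_of_eq)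
qed

definition obsF :: "('a list set \<times> 'a) list \<Rightarrow> ('a list set \<times> 'a) list" where
  "obsF os = map (\<lambda>i. ({g \<in> fst (os ! i). obs1 G g = take i os}, snd (os ! i))) [0..<length os]"

lemma obs1_pr1: "obs1 (pr1 G) h = obsF (obs1 G h)"
proof -
  let ?P = "\<lambda>k. take k h \<in> P1 G"
  let ?L = "filter ?P [0..<length h]"
  let ?f = "\<lambda>k. (infoset_of G (take k h), h ! k)"
  have o: "obs1 G h = map ?f ?L" unfolding obs1_def ..
  have o': "obs1 (pr1 G) h = map (\<lambda>k. (infoset_of (pr1 G) (take k h), h ! k)) ?L"
    unfolding obs1_def by simp
  show ?thesis
  proof (rule nth_equalityI)
    show "length (obs1 (pr1 G) h) = length (obsF (obs1 G h))" unfolding o o' obsF_def by simp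
  next
    fix i assume "i < length (obs1 (pr1 G) h)"
    then have i: "i < length ?L" unfolding o' by simp
    let ?k = "?L ! i"
    have kL: "?k \<in> set ?L" using i by (rule nth_mem)
    then have "?k \<in> set [0..<length h] \<and> ?P ?k" by (simp only: set_filter mem_Collect_eq)
    then have k: "?k < length h" "?P ?k" by auto
    have "obs1 G (take ?k h) = map ?f (filter ?P [0..<?k])"
      using obs1_take[of ?k h G] k by simp
    also have "\<dots> = map ?f (take i ?L)" using filter_upt_nth[OF i] by simp
    also have "\<dots> = take i (obs1 G h)" unfolding o by (simp add: take_map)
    finally have ok: "obs1 G (take ?k h) = take i (obs1 G h)" .
    have "obs1 (pr1 G) h ! i = (infoset_of (pr1 G) (take ?k h), h ! ?k)" unfolding o' using i by simp
    also have "\<dots> = ({g \<in> infoset_of G (take ?k h). obs1 G g = take i (obs1 G h)}, h ! ?k)"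
      using infoset_of_pr1[OF k(2)] ok by simp
    also have "\<dots> = obsF (obs1 G h) ! i" unfolding obsF_def o using i by simp
    finally show "obs1 (pr1 G) h ! i = obsF (obs1 G h) ! i" .
  qed
qed

lemma prg_pr1: "prg (pr1 G)"
proof (unfold_locales)
  show "wf_game (pr1 G)" by (rule wf_pr1)
next
  fix J h h' assume J: "J \<in> infosets (pr1 G)" and h: "h \<in> J" and h': "h' \<in> J"
  obtain I h0 where "I \<in> infosets G" "h0 \<in> I" "J = {h \<in> I. obs1 G h = obs1 G h0}"
    using J by (rule pr1_infosetsE)
  then have "obs1 G h = obs1 G h'" using h h' by simp
  then show "obs1 (pr1 G) h = obs1 (pr1 G) h'" unfolding obs1_pr1 by simp
qed

definition lift :: "'a strategy \<Rightarrow> 'a strategy" where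
  "lift \<sigma> J = \<sigma> (infoset_of G (SOME h. h \<in> J))"

lemma lift_at:
  assumes g: "g \<in> P1 G"
  shows "lift \<sigma> (infoset_of (pr1 G) g) = \<sigma> (infoset_of G g)"
proof -
  let ?J = "infoset_of (pr1 G) g"
  have "g \<in> ?J" using infoset_of_pr1[OF g] infoset_of_in[OF g] by simp
  then have "(SOME h. h \<in> ?J) \<in> ?J" by (rule someI)
  then have "(SOME h. h \<in> ?J) \<in> infoset_of G g" using infoset_of_pr1[OF g] by simp
  then have "infoset_of G (SOME h. h \<in> ?J) = infoset_of G g"
    using infoset_of_eq infoset_of_in[OF g] by blast
  then show ?thesis unfolding lift_def by simp
qed

lemma U_lift: "U (pr1 G) (lift \<sigma>) = U G \<sigma>"
proof -
  have "fac (pr1 G) (lift \<sigma>) z k = fac G \<sigma> z k" for z k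
    unfolding fac_def using lift_at by simp
  then show ?thesis unfolding U_fac by simp
qed

lemma lift_strat:
  assumes \<sigma>: "\<sigma> \<in> strategies G"
  shows "lift \<sigma> \<in> strategies (pr1 G)"
  unfolding strategies_def
proof (intro CollectI ballI)
  fix J assume J: "J \<in> infosets (pr1 G)"
  obtain I h0 where I: "I \<in> infosets G" "h0 \<in> I" and Jd: "J = {h \<in> I. obs1 G h = obs1 G h0}"
    using J by (rule pr1_infosetsE)
  have "h0 \<in> J" using Jd I by simp
  then have s: "(SOME h. h \<in> J) \<in> J" by (rule someI)
  then have sI: "(SOME h. h \<in> J) \<in> I" using Jd by blast
  then have A: "infoset_of G (SOME h. h \<in> J) = I" using infoset_of_eq[OF I(1)] by blast
  have "actsI (pr1 G) J = acts G (SOME h. h \<in> J)" by (simp add: actsI_def)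
  then have B: "actsI (pr1 G) J = actsI G I" using actsI_eq[OF I(1) sI] by simp
  from A B show "lift \<sigma> J \<in> simplex (actsI (pr1 G) J)"
    unfolding lift_def using \<sigma> I(1) unfolding strategies_def by simp
qed

end



lemma subseq_conv:
  fixes f :: "nat \<Rightarrow> 'k \<Rightarrow> real"
  assumes "finite K" and b: "\<And>\<kappa> n. \<kappa> \<in> K \<Longrightarrow> \<bar>f n \<kappa>\<bar> \<le> B"
  shows "\<exists>r. strict_mono r \<and> (\<forall>\<kappa>\<in>K. convergent (\<lambda>n. f (r n) \<kappa>))"
  using assms(1) b
proof (induction K rule: finite_induct)
  case empty
  have "strict_mono (\<lambda>n::nat. n)" by (simp add: strict_mono_def)
  then show ?case by blast
next
  case (insert x F)
  then obtain r where r: "strict_mono r" "\<forall>\<kappa>\<in>F. convergent (\<lambda>n. f (r n) \<kappa>)" by blast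
  obtain g where g: "strict_mono g" "monoseq (\<lambda>n. f (r (g n)) x)"
    using seq_monosub[of "\<lambda>n. f (r n) x"] by blast
  have "Bseq (\<lambda>n. f (r (g n)) x)" using insert.prems by (intro BseqI'[where K=B]) simp
  then have cx: "convergent (\<lambda>n. f (r (g n)) x)" using g(2) by (rule Bseq_monoseq_convergent)
  have "convergent (\<lambda>n. f (r (g n)) \<kappa>)" if "\<kappa> \<in> F" for \<kappa>
    using convergent_subseq_convergent[OF r(2)[rule_format, OF that] g(1)] by (simp add: comp_def)
  then have "\<forall>\<kappa>\<in>insert x F. convergent (\<lambda>n. f ((r \<circ> g) n) \<kappa>)" using cx by simp
  moreover have "strict_mono (r \<circ> g)" using r(1) g(1) by (rule strict_mono_o)
  ultimately show ?case by blast
qed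

context wfg
begin

definition coords :: "('a list set \<times> 'a) set" where
  "coords = Sigma (infosets G) (actsI G)"

lemma fin_coords: "finite coords"
  unfolding coords_def using fin_infosets fin_actsI by simp

lemma strat_abs_le1:
  assumes "\<pi> \<in> strategies G" "I \<in> infosets G" "a \<in> actsI G I"
  shows "\<bar>\<pi> I a\<bar> \<le> 1"
proof -
  have s: "\<pi> I \<in> simplex (actsI G I)" using assms unfolding strategies_def by blast
  show ?thesis using simplex_le1[OF s fin_actsI assms(3)] simplex_ge0[OF s assms(3)] by simp
qed

lemma strat_subseq:
  fixes \<pi>s :: "nat \<Rightarrow> 'a strategy"
  assumes "\<And>n. \<pi>s n \<in> strategies G"
  shows "\<exists>r \<pi>. strict_mono r \<and> converges_to G (\<lambda>n. \<pi>s (r n)) \<pi>"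
proof -
  obtain r where r: "strict_mono r" "\<forall>\<kappa>\<in>coords. convergent (\<lambda>n. \<pi>s (r n) (fst \<kappa>) (snd \<kappa>))"
    using subseq_conv[OF fin_coords, of "\<lambda>n \<kappa>. \<pi>s n (fst \<kappa>) (snd \<kappa>)" 1]
      strat_abs_le1[OF assms] unfolding coords_def by auto
  define \<pi> where "\<pi> = (\<lambda>I a. lim (\<lambda>n. \<pi>s (r n) I a))"
  have "converges_to G (\<lambda>n. \<pi>s (r n)) \<pi>"
    unfolding converges_to_def
  proof (intro ballI)
    fix I a assume "I \<in> infosets G" "a \<in> actsI G I"
    then have "convergent (\<lambda>n. \<pi>s (r n) I a)" using r(2) unfolding coords_def by force
    then show "(\<lambda>n. \<pi>s (r n) I a) \<longlonglongrightarrow> \<pi> I a" unfolding \<pi>_def by (simp add: convergent_LIMSEQ_iff)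
  qed
  then show ?thesis using r(1) by blast
qed

definition Pd :: "real \<Rightarrow> 'a strategy set" where
  "Pd \<delta> = {\<pi> \<in> strategies G. \<forall>I\<in>infosets G. \<forall>a\<in>actsI G I. \<delta> \<le> \<pi> I a}"

lemma Pd_closed:
  assumes s: "\<And>n. \<pi>s n \<in> Pd \<delta>" and c: "converges_to G \<pi>s \<pi>" and \<delta>: "0 \<le> \<delta>"
  shows "\<pi> \<in> Pd \<delta>"
  unfolding Pd_def strategies_def
proof (intro CollectI conjI ballI)
  fix I assume I: "I \<in> infosets G"
  have lim: "a \<in> actsI G I \<Longrightarrow> (\<lambda>n. \<pi>s n I a) \<longlonglongrightarrow> \<pi> I a" for a
    using c I unfolding converges_to_def by blast
  have lb: "a \<in> actsI G I \<Longrightarrow> \<delta> \<le> \<pi>s n I a" for a n using s[of n] I unfolding Pd_def by blast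
  have sn: "\<pi>s n I \<in> simplex (actsI G I)" for n using s[of n] I unfolding Pd_def strategies_def by blast
  show lb': "\<delta> \<le> \<pi> I a" if a: "a \<in> actsI G I" for a
    by (rule LIMSEQ_le_const[OF lim[OF a]]) (use lb[OF a] in blast)
  have "(\<lambda>n. \<Sum>a\<in>actsI G I. \<pi>s n I a) \<longlonglongrightarrow> (\<Sum>a\<in>actsI G I. \<pi> I a)"
    by (intro tendsto_sum lim)
  moreover have "(\<lambda>n. \<Sum>a\<in>actsI G I. \<pi>s n I a) = (\<lambda>n. 1)"
  proof
    fix n show "(\<Sum>a\<in>actsI G I. \<pi>s n I a) = 1" using sn[of n] unfolding simplex_def by blast
  qed
  ultimately have "(\<lambda>n. 1::real) \<longlonglongrightarrow> (\<Sum>a\<in>actsI G I. \<pi> I a)" by simp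
  then have sum1: "(\<Sum>a\<in>actsI G I. \<pi> I a) = 1" using LIMSEQ_unique[OF _ tendsto_const] by blast
  have "\<forall>a\<in>actsI G I. 0 \<le> \<pi> I a" using lb' \<delta> order_trans by blast
  then show "\<pi> I \<in> simplex (actsI G I)" unfolding simplex_def using sum1 by blast
qed

lemma U_bdd: "\<pi> \<in> Pd \<delta> \<Longrightarrow> U G \<pi> \<le> (\<Sum>z\<in>leaves G. util G z)"
  unfolding Pd_def using U_le by blast

lemma max_exists:
  assumes ne: "Pd \<delta> \<noteq> {}" and \<delta>: "0 \<le> \<delta>"
  shows "\<exists>\<pi>\<in>Pd \<delta>. \<forall>\<pi>'\<in>Pd \<delta>. U G \<pi>' \<le> U G \<pi>"
proof -
  let ?S = "U G ` Pd \<delta>"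
  define s where "s = Sup ?S"
  have bdd: "bdd_above ?S" using U_bdd by (intro bdd_aboveI) blast
  have Sne: "?S \<noteq> {}" using ne by simp
  have "\<forall>n. \<exists>x\<in>Pd \<delta>. s - inverse (real (Suc n)) < U G x"
  proof
    fix n
    have "s - inverse (real (Suc n)) < s" by simp
    then show "\<exists>x\<in>Pd \<delta>. s - inverse (real (Suc n)) < U G x"
      unfolding s_def using less_cSup_iff[OF Sne bdd] by auto
  qed
  then obtain x where x: "\<And>n. x n \<in> Pd \<delta>" "\<And>n. s - inverse (real (Suc n)) < U G (x n)"
    by metis
  have xs: "x n \<in> strategies G" for n using x(1) unfolding Pd_def by blast
  obtain r \<pi> where r: "strict_mono r" and c: "converges_to G (\<lambda>n. x (r n)) \<pi>"
    using strat_subseq[of x, OF xs] by blast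
  have \<pi>: "\<pi> \<in> Pd \<delta>" using Pd_closed[OF _ c \<delta>] x(1) by blast
  have "s - inverse (real (Suc n)) \<le> U G (x (r n))" for n
  proof -
    have "n \<le> r n" using seq_suble[OF r] .
    then have le: "inverse (real (Suc (r n))) \<le> inverse (real (Suc n))"
      by (intro le_imp_inverse_le) auto
    show ?thesis using x(2)[of "r n"] le by linarith
  qed
  moreover have "(\<lambda>n. s - inverse (real (Suc n))) \<longlonglongrightarrow> s - 0"
    by (intro tendsto_intros LIMSEQ_inverse_real_of_nat)
  ultimately have "s \<le> U G \<pi>"
    using LIMSEQ_le[OF _ U_tendsto[OF c]] by auto
  moreover have "U G \<pi>' \<le> s" if "\<pi>' \<in> Pd \<delta>" for \<pi>'
    unfolding s_def using that bdd by (intro cSup_upper) auto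
  ultimately show ?thesis using \<pi> by force
qed

end



lemma prod_diff_le:
  fixes a b :: "nat \<Rightarrow> real"
  assumes "finite R" "\<And>k. k \<in> R \<Longrightarrow> 0 \<le> a k \<and> a k \<le> 1 \<and> 0 \<le> b k \<and> b k \<le> 1"
  shows "\<bar>(\<Prod>k\<in>R. a k) - (\<Prod>k\<in>R. b k)\<bar> \<le> (\<Sum>k\<in>R. \<bar>a k - b k\<bar>)"
  using assms
proof (induction R rule: finite_induct)
  case empty
  then show ?case by simp
next
  case (insert x F)
  have ab: "0 \<le> a x" "a x \<le> 1" "0 \<le> b x" "b x \<le> 1" using insert.prems by auto
  have pa: "0 \<le> (\<Prod>k\<in>F. a k)" "(\<Prod>k\<in>F. a k) \<le> 1" using insert.prems by (auto intro: prod_nonneg prod_le_1)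
  have pb: "0 \<le> (\<Prod>k\<in>F. b k)" "(\<Prod>k\<in>F. b k) \<le> 1" using insert.prems by (auto intro: prod_nonneg prod_le_1)
  have IH: "\<bar>(\<Prod>k\<in>F. a k) - (\<Prod>k\<in>F. b k)\<bar> \<le> (\<Sum>k\<in>F. \<bar>a k - b k\<bar>)" using insert by auto
  have "a x * (\<Prod>k\<in>F. a k) - b x * (\<Prod>k\<in>F. b k) =
        a x * ((\<Prod>k\<in>F. a k) - (\<Prod>k\<in>F. b k)) + (a x - b x) * (\<Prod>k\<in>F. b k)"
    by (simp add: algebra_simps)
  then have "\<bar>a x * (\<Prod>k\<in>F. a k) - b x * (\<Prod>k\<in>F. b k)\<bar> \<le>
      \<bar>a x\<bar> * \<bar>(\<Prod>k\<in>F. a k) - (\<Prod>k\<in>F. b k)\<bar> + \<bar>a x - b x\<bar> * \<bar>\<Prod>k\<in>F. b k\<bar>"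
    by (metis abs_mult abs_triangle_ineq)
  also have "\<dots> \<le> 1 * \<bar>(\<Prod>k\<in>F. a k) - (\<Prod>k\<in>F. b k)\<bar> + \<bar>a x - b x\<bar> * 1"
    using ab pb by (intro add_mono mult_right_mono mult_left_mono) auto
  also have "\<dots> \<le> (\<Sum>k\<in>F. \<bar>a k - b k\<bar>) + \<bar>a x - b x\<bar>" using IH by simp
  finally show ?case using insert(1,2) by (simp add: add.commute)
qed

context wfg
begin

definition Mc :: real where
  "Mc = (\<Sum>I\<in>infosets G. real (card (actsI G I)))"

definition Cst :: real where
  "Cst = Mc * (\<Sum>z\<in>leaves G. (real (length z) + 1) * util G z)"

lemma card_le_Mc: "I \<in> infosets G \<Longrightarrow> real (card (actsI G I)) \<le> Mc"
  unfolding Mc_def by (rule member_le_sum) (auto simp: fin_infosets)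

lemma Mc_nonneg: "0 \<le> Mc" unfolding Mc_def by (simp add: sum_nonneg)

lemma probI_ge:
  assumes I: "I \<in> infosets G" and \<pi>: "\<pi> \<in> strategies G" and h: "h \<in> first_nodes I"
  shows "reach G \<pi> h \<le> probI G \<pi> I"
proof -
  have fin: "finite (first_nodes I)" using fin_I[OF I] unfolding first_nodes_def by simp
  have "\<And>g. g \<in> first_nodes I \<Longrightarrow> 0 \<le> reach G \<pi> g"
    using reach_bounds[OF \<pi>] inf_subH[OF I] unfolding first_nodes_def by blast
  then show ?thesis unfolding probI_def using member_le_sum[OF h _ fin] by blast
qed

lemma probI_le_card:
  assumes I: "I \<in> infosets G" and \<pi>: "\<pi> \<in> strategies G"
  shows "probI G \<pi> I \<le> card I"
proof -
  have "probI G \<pi> I \<le> (\<Sum>h\<in>first_nodes I. 1)" unfolding probI_def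
    using reach_bounds[OF \<pi>] inf_subH[OF I] unfolding first_nodes_def by (intro sum_mono) blast
  also have "\<dots> = card (first_nodes I)" by simp
  also have "\<dots> \<le> card I"
  proof -
    have "card (first_nodes I) \<le> card I" using fin_I[OF I] unfolding first_nodes_def by (intro card_mono) auto
    then show ?thesis by simp
  qed
  finally show ?thesis by simp
qed

lemma Fr_le_card:
  assumes I: "I \<in> infosets G" and \<pi>: "\<pi> \<in> strategies G"
  shows "Fr G \<pi> I \<le> card I"
proof -
  have "Fr G \<pi> I \<le> (\<Sum>h\<in>I. 1)" unfolding Fr_def
    using reach_bounds[OF \<pi>] inf_subH[OF I] by (intro sum_mono) blast
  then show ?thesis by simp
qed

lemma probI_nonneg:
  assumes I: "I \<in> infosets G" and \<pi>: "\<pi> \<in> strategies G"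
  shows "0 \<le> probI G \<pi> I"
  unfolding probI_def using reach_bounds[OF \<pi>] inf_subH[OF I] unfolding first_nodes_def
  by (intro sum_nonneg) blast

lemma Fr_nonneg:
  assumes I: "I \<in> infosets G" and \<pi>: "\<pi> \<in> strategies G"
  shows "0 \<le> Fr G \<pi> I"
  unfolding Fr_def using reach_bounds[OF \<pi>] inf_subH[OF I] by (intro sum_nonneg) blast

lemma F_bounds:
  assumes I: "I \<in> infosets G" and \<pi>: "\<pi> \<in> strategies G" and x: "x \<in> simplex (actsI G I)"
    and z: "z \<in> H G" and k: "k < length z"
  shows "0 \<le> (if take k z \<in> I then x (z ! k) else fac G \<pi> z k) \<and> (if take k z \<in> I then x (z ! k) else fac G \<pi> z k) \<le> 1"
proof (cases "take k z \<in> I")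
  case True
  have a: "z ! k \<in> actsI G I" using actsI_eq[OF I True] act_prefix[OF z k] by simp
  show ?thesis using True simplex_le1[OF x fin_actsI a] simplex_ge0[OF x a] by simp
next
  case False
  then show ?thesis using fac_bounds[OF \<pi> z k] by simp
qed

lemma EDT_leaf_bound:
  assumes I: "I \<in> infosets G" and \<pi>: "\<pi> \<in> strategies G"
    and x: "x \<in> simplex (actsI G I)" and y: "y \<in> simplex (actsI G I)"
    and xy: "\<And>a. a \<in> actsI G I \<Longrightarrow> \<bar>x a - y a\<bar> \<le> c"
    and z: "z \<in> H G"
  shows "\<bar>(\<Prod>k<length z. (if take k z \<in> I then x (z ! k) else fac G \<pi> z k)) -
          (\<Prod>k<length z. (if take k z \<in> I then y (z ! k) else fac G \<pi> z k))\<bar>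
         \<le> probI G \<pi> I * (real (length z) * c)"
proof (cases "\<exists>k<length z. take k z \<in> I")
  case True
  define j0 where "j0 = (LEAST k. k < length z \<and> take k z \<in> I)"
  have j0: "j0 < length z" "take j0 z \<in> I" using LeastI_ex[OF True] unfolding j0_def by auto
  have before: "k < j0 \<Longrightarrow> take k z \<notin> I" for k
    using not_less_Least[of k "\<lambda>k. k < length z \<and> take k z \<in> I"] j0(1) unfolding j0_def by auto
  have c0: "0 \<le> c" using xy[of "z ! j0"] actsI_eq[OF I j0(2)] act_prefix[OF z j0(1)] by auto
  let ?F = "\<lambda>w k. (if take k z \<in> I then w (z ! k) else fac G \<pi> z k)"
  have split: "(\<Prod>k<length z. ?F w k) = reach G \<pi> (take j0 z) * (\<Prod>k\<in>{j0..<length z}. ?F w k)" for w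
  proof -
    have "{..<length z} = {..<j0} \<union> {j0..<length z}" using j0(1) by auto
    then have "(\<Prod>k<length z. ?F w k) = (\<Prod>k\<in>{..<j0}. ?F w k) * (\<Prod>k\<in>{j0..<length z}. ?F w k)"
      by (simp add: prod.union_disjoint ivl_disj_int_one(2))
    moreover have "(\<Prod>k\<in>{..<j0}. ?F w k) = reach G \<pi> (take j0 z)"
      using reach_prefix[of j0 z G \<pi>] j0(1) before by simp
    ultimately show ?thesis by simp
  qed
  have fn: "take j0 z \<in> first_nodes I" unfolding first_nodes_def using j0 before by auto
  have R: "0 \<le> reach G \<pi> (take j0 z)" "reach G \<pi> (take j0 z) \<le> probI G \<pi> I"
    using reach_bounds[OF \<pi> takeH[OF z]] probI_ge[OF I \<pi> fn] by auto
  have "\<bar>(\<Prod>k\<in>{j0..<length z}. ?F x k) - (\<Prod>k\<in>{j0..<length z}. ?F y k)\<bar> \<le> (\<Sum>k\<in>{j0..<length z}. \<bar>?F x k - ?F y k\<bar>)"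
    using F_bounds[OF I \<pi> x z] F_bounds[OF I \<pi> y z] by (intro prod_diff_le) auto
  also have "\<dots> \<le> (\<Sum>k\<in>{j0..<length z}. c)"
  proof (rule sum_mono)
    fix k assume k: "k \<in> {j0..<length z}"
    show "\<bar>?F x k - ?F y k\<bar> \<le> c"
    proof (cases "take k z \<in> I")
      case True
      have a: "z ! k \<in> actsI G I" using actsI_eq[OF I True] act_prefix[OF z] k by simp
      then show ?thesis using True xy[OF a] by simp
    next
      case False
      then show ?thesis using c0 by simp
    qed
  qed
  also have "\<dots> \<le> real (length z) * c" using c0 by (simp add: mult_right_mono)
  finally have Q: "\<bar>(\<Prod>k\<in>{j0..<length z}. ?F x k) - (\<Prod>k\<in>{j0..<length z}. ?F y k)\<bar> \<le> real (length z) * c" .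
  have "\<bar>(\<Prod>k<length z. ?F x k) - (\<Prod>k<length z. ?F y k)\<bar> =
      reach G \<pi> (take j0 z) * \<bar>(\<Prod>k\<in>{j0..<length z}. ?F x k) - (\<Prod>k\<in>{j0..<length z}. ?F y k)\<bar>"
    unfolding split using R(1) by (simp add: abs_mult right_diff_distrib[symmetric])
  also have "\<dots> \<le> probI G \<pi> I * (real (length z) * c)"
    using R Q c0 by (intro mult_mono) auto
  finally show ?thesis .
next
  case False
  then have "(\<Prod>k<length z. (if take k z \<in> I then w (z ! k) else fac G \<pi> z k)) = (\<Prod>k<length z. fac G \<pi> z k)" for w
    by (intro prod.cong) auto
  moreover have "0 \<le> probI G \<pi> I * (real (length z) * c)"
  proof (cases "length z = 0")
    case True then show ?thesis by simp
  next
    case False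
    then obtain k where "k < length z" by blast
    have "0 \<le> probI G \<pi> I" by (rule probI_nonneg[OF I \<pi>])
    moreover have "0 \<le> c"
    proof -
      obtain a where "a \<in> actsI G I" using actsI_ne[OF I] by blast
      then show ?thesis using xy[of a] by auto
    qed
    ultimately show ?thesis by simp
  qed
  ultimately show ?thesis by simp
qed

end



context wfg
begin

lemma sigma'_props:
  assumes \<sigma>: "\<sigma> \<in> simplex A" and fin: "finite A" and \<delta>: "0 < \<delta>" "real (card A) * \<delta> \<le> 1"
  defines "\<sigma>' \<equiv> (\<lambda>a. (1 - real (card A) * \<delta>) * \<sigma> a + \<delta>)"
  shows "\<sigma>' \<in> simplex A" "\<And>a. a \<in> A \<Longrightarrow> \<delta> \<le> \<sigma>' a" "\<And>a. a \<in> A \<Longrightarrow> \<bar>\<sigma> a - \<sigma>' a\<bar> \<le> real (card A) * \<delta>"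
proof -
  have s0: "a \<in> A \<Longrightarrow> 0 \<le> \<sigma> a" for a using \<sigma> unfolding simplex_def by blast
  have s1: "a \<in> A \<Longrightarrow> \<sigma> a \<le> 1" for a using simplex_le1[OF \<sigma> fin] by blast
  have ssum: "sum \<sigma> A = 1" using \<sigma> unfolding simplex_def by blast
  show ge: "\<delta> \<le> \<sigma>' a" if a: "a \<in> A" for a
    unfolding \<sigma>'_def using s0[OF a] \<delta> by simp
  have "sum \<sigma>' A = (1 - real (card A) * \<delta>) * sum \<sigma> A + real (card A) * \<delta>"
    unfolding \<sigma>'_def by (simp add: sum.distrib sum_distrib_left)
  then have "sum \<sigma>' A = 1" using ssum by simp
  then show "\<sigma>' \<in> simplex A" unfolding simplex_def using ge \<delta>(1) by force
  show "\<bar>\<sigma> a - \<sigma>' a\<bar> \<le> real (card A) * \<delta>" if a: "a \<in> A" for a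
  proof -
    have "0 < card A" using a fin card_gt_0_iff by blast
    then have c1: "1 \<le> real (card A)" by simp
    have "\<sigma> a - \<sigma>' a = \<delta> * (real (card A) * \<sigma> a - 1)" unfolding \<sigma>'_def by (simp add: algebra_simps)
    moreover have "\<bar>real (card A) * \<sigma> a - 1\<bar> \<le> real (card A)"
    proof -
      have "0 \<le> real (card A) * \<sigma> a" using s0[OF a] by simp
      moreover have "real (card A) * \<sigma> a \<le> real (card A)" using s1[OF a] by (simp add: mult_left_le)
      ultimately show ?thesis using c1 by linarith
    qed
    ultimately show ?thesis using \<delta>(1) by (simp add: abs_mult mult.commute mult_left_mono)
  qed
qed

lemma upd_Pd:
  assumes \<pi>: "\<pi> \<in> Pd \<delta>" and I: "I \<in> infosets G" and x: "x \<in> simplex (actsI G I)"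
    and xd: "\<And>a. a \<in> actsI G I \<Longrightarrow> \<delta> \<le> x a"
  shows "\<pi>(I := x) \<in> Pd \<delta>"
  using assms unfolding Pd_def strategies_def by auto

lemma U_diff_sum:
  assumes I: "I \<in> infosets G"
  shows "U G (\<pi>(I := x)) - U G (\<pi>(I := y)) = (\<Sum>z\<in>leaves G.
      ((\<Prod>k<length z. (if take k z \<in> I then x (z ! k) else fac G \<pi> z k)) -
       (\<Prod>k<length z. (if take k z \<in> I then y (z ! k) else fac G \<pi> z k))) * util G z)"
  apply (subst U_upd[OF I])+
  apply (subst sum_subtractf[symmetric])
  apply (rule sum.cong[OF refl])
  apply (rule left_diff_distrib[symmetric])
  done

lemma EDT_max_bound:
  assumes \<pi>: "\<pi> \<in> Pd \<delta>" and mx: "\<And>\<pi>'. \<pi>' \<in> Pd \<delta> \<Longrightarrow> U G \<pi>' \<le> U G \<pi>"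
    and \<delta>: "0 < \<delta>" "Mc * \<delta> \<le> 1" and I: "I \<in> infosets G" and \<sigma>: "\<sigma> \<in> simplex (actsI G I)"
  shows "U G (\<pi>(I := \<sigma>)) - U G \<pi> \<le> probI G \<pi> I * (\<delta> * Cst)"
proof -
  let ?A = "actsI G I"
  let ?m = "real (card ?A)"
  define \<sigma>' where "\<sigma>' = (\<lambda>a. (1 - ?m * \<delta>) * \<sigma> a + \<delta>)"
  have md: "?m * \<delta> \<le> 1" using card_le_Mc[OF I] \<delta> by (meson dual_order.trans mult_right_mono less_imp_le)
  have \<sigma>'s: "\<sigma>' \<in> simplex ?A" and \<sigma>'d: "\<And>a. a \<in> ?A \<Longrightarrow> \<delta> \<le> \<sigma>' a"
    and \<sigma>'c: "\<And>a. a \<in> ?A \<Longrightarrow> \<bar>\<sigma> a - \<sigma>' a\<bar> \<le> ?m * \<delta>"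
    using sigma'_props[OF \<sigma> fin_actsI \<delta>(1) md] unfolding \<sigma>'_def by auto
  have \<pi>s: "\<pi> \<in> strategies G" using \<pi> unfolding Pd_def by blast
  have up: "U G (\<pi>(I := \<sigma>')) \<le> U G \<pi>" using mx upd_Pd[OF \<pi> I \<sigma>'s \<sigma>'d] by blast
  have "U G (\<pi>(I := \<sigma>)) - U G (\<pi>(I := \<sigma>')) = (\<Sum>z\<in>leaves G.
      ((\<Prod>k<length z. (if take k z \<in> I then \<sigma> (z ! k) else fac G \<pi> z k)) -
       (\<Prod>k<length z. (if take k z \<in> I then \<sigma>' (z ! k) else fac G \<pi> z k))) * util G z)"
    by (rule U_diff_sum[OF I])
  also have "\<dots> \<le> (\<Sum>z\<in>leaves G. probI G \<pi> I * (real (length z) * (?m * \<delta>)) * util G z)"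
  proof (rule sum_mono)
    fix z assume z: "z \<in> leaves G"
    have "\<bar>(\<Prod>k<length z. (if take k z \<in> I then \<sigma> (z ! k) else fac G \<pi> z k)) -
       (\<Prod>k<length z. (if take k z \<in> I then \<sigma>' (z ! k) else fac G \<pi> z k))\<bar> \<le> probI G \<pi> I * (real (length z) * (?m * \<delta>))"
      by (rule EDT_leaf_bound[OF I \<pi>s \<sigma> \<sigma>'s \<sigma>'c leavesH[OF z]])
    then show "((\<Prod>k<length z. (if take k z \<in> I then \<sigma> (z ! k) else fac G \<pi> z k)) -
       (\<Prod>k<length z. (if take k z \<in> I then \<sigma>' (z ! k) else fac G \<pi> z k))) * util G z \<le>
       probI G \<pi> I * (real (length z) * (?m * \<delta>)) * util G z"
      using util_nonneg[OF z] by (intro mult_right_mono) auto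
  qed
  also have "\<dots> \<le> (\<Sum>z\<in>leaves G. probI G \<pi> I * (\<delta> * (Mc * ((real (length z) + 1) * util G z))))"
  proof (rule sum_mono)
    fix z assume z: "z \<in> leaves G"
    have p: "0 \<le> probI G \<pi> I" by (rule probI_nonneg[OF I \<pi>s])
    have u: "0 \<le> util G z" using util_nonneg[OF z] .
    have "real (length z) * ?m \<le> real (length z) * Mc"
      using card_le_Mc[OF I] by (intro mult_left_mono) simp_all
    then have "real (length z) * ?m \<le> Mc * (real (length z) + 1)"
      using Mc_nonneg by (simp add: algebra_simps)
    then have h1: "(real (length z) * ?m) * util G z \<le> (Mc * (real (length z) + 1)) * util G z"
      by (rule mult_right_mono[OF _ u])
    have h2: "\<delta> * ((real (length z) * ?m) * util G z) \<le> \<delta> * ((Mc * (real (length z) + 1)) * util G z)"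
      by (rule mult_left_mono[OF h1]) (use \<delta>(1) in simp)
    have e1: "real (length z) * (?m * \<delta>) * util G z = \<delta> * ((real (length z) * ?m) * util G z)"
      by (simp add: ac_simps)
    have e2: "\<delta> * (Mc * ((real (length z) + 1) * util G z)) = \<delta> * ((Mc * (real (length z) + 1)) * util G z)"
      by (simp add: ac_simps)
    have "real (length z) * (?m * \<delta>) * util G z \<le> \<delta> * (Mc * ((real (length z) + 1) * util G z))"
      unfolding e1 e2 by (rule h2)
    then show "probI G \<pi> I * (real (length z) * (?m * \<delta>)) * util G z \<le> probI G \<pi> I * (\<delta> * (Mc * ((real (length z) + 1) * util G z)))"
      using p by (simp add: mult_left_mono mult.assoc)
  qed
  also have "\<dots> = probI G \<pi> I * (\<delta> * Cst)"
    unfolding Cst_def by (simp add: sum_distrib_left)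
  finally show ?thesis using up by simp
qed

end



context wfg
begin

lemma dUf_nonneg:
  assumes \<pi>: "\<pi> \<in> strategies G"
  shows "0 \<le> dUf G \<pi> I a"
  unfolding dUf_def
proof (rule sum_nonneg)
  fix z assume z: "z \<in> leaves G"
  have "0 \<le> (\<Sum>j<length z. if take j z \<in> I \<and> z ! j = a then (\<Prod>k\<in>{..<length z}-{j}. fac G \<pi> z k) else 0)"
    using fac_bounds[OF \<pi> leavesH[OF z]] by (intro sum_nonneg) (auto intro!: prod_nonneg)
  then show "0 \<le> (\<Sum>j<length z. if take j z \<in> I \<and> z ! j = a then (\<Prod>k\<in>{..<length z}-{j}. fac G \<pi> z k) else 0) * util G z"
    using util_nonneg[OF z] by simp
qed

lemma tail_bounds:
  assumes \<pi>: "\<pi> \<in> strategies G" and z: "z \<in> H G"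
  shows "0 \<le> tail G \<pi> z j \<and> tail G \<pi> z j \<le> 1"
  unfolding tail_def using fac_bounds[OF \<pi> z] by (auto intro!: prod_nonneg prod_le_1)

lemma leaf_Fr_bound:
  assumes I: "I \<in> infosets G" and \<pi>: "\<pi> \<in> strategies G" and z: "z \<in> H G"
  shows "(\<Sum>j<length z. if take j z \<in> I then 1 * (\<Prod>k\<in>{..<length z}-{j}. fac G \<pi> z k) else 0) \<le> Fr G \<pi> I"
proof -
  have "(\<Sum>j<length z. if take j z \<in> I then 1 * (\<Prod>k\<in>{..<length z}-{j}. fac G \<pi> z k) else 0)
      \<le> (\<Sum>j<length z. if take j z \<in> I then reach G \<pi> (take j z) else 0)"
  proof (rule sum_mono)
    fix j assume j: "j \<in> {..<length z}"
    have "(\<Prod>k\<in>{..<length z}-{j}. fac G \<pi> z k) = reach G \<pi> (take j z) * tail G \<pi> z j"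
      using j by (intro prod_minus_split) simp
    also have "\<dots> \<le> reach G \<pi> (take j z)"
      using reach_bounds[OF \<pi> takeH[OF z]] tail_bounds[OF \<pi> z] by (simp add: mult_left_le)
    finally show "(if take j z \<in> I then 1 * (\<Prod>k\<in>{..<length z}-{j}. fac G \<pi> z k) else 0)
      \<le> (if take j z \<in> I then reach G \<pi> (take j z) else 0)" by simp
  qed
  also have "\<dots> = (\<Sum>j\<in>{j\<in>{..<length z}. take j z \<in> I}. reach G \<pi> (take j z))"
    by (subst sum.inter_filter) auto
  also have "\<dots> = (\<Sum>h\<in>(\<lambda>j. take j z) ` {j\<in>{..<length z}. take j z \<in> I}. reach G \<pi> h)"
  proof -
    have "inj_on (\<lambda>j. take j z) {j\<in>{..<length z}. take j z \<in> I}"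
    proof (rule inj_onI)
      fix j j' assume a: "j \<in> {j\<in>{..<length z}. take j z \<in> I}" "j' \<in> {j\<in>{..<length z}. take j z \<in> I}"
        and e: "take j z = take j' z"
      have "length (take j z) = length (take j' z)" using e by simp
      then show "j = j'" using a by simp
    qed
    then show ?thesis by (simp add: sum.reindex)
  qed
  also have "\<dots> \<le> (\<Sum>h\<in>I. reach G \<pi> h)"
  proof (rule sum_mono2[OF fin_I[OF I]])
    show "(\<lambda>j. take j z) ` {j\<in>{..<length z}. take j z \<in> I} \<subseteq> I" by blast
    show "\<And>b. b \<in> I - (\<lambda>j. take j z) ` {j\<in>{..<length z}. take j z \<in> I} \<Longrightarrow> 0 \<le> reach G \<pi> b"
      using reach_bounds[OF \<pi>] inf_subH[OF I] by blast
  qed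
  finally show ?thesis unfolding Fr_def .
qed

lemma dUf_sum_le:
  assumes I: "I \<in> infosets G" and \<pi>: "\<pi> \<in> strategies G"
  shows "(\<Sum>a\<in>actsI G I. dUf G \<pi> I a) \<le> Fr G \<pi> I * (\<Sum>z\<in>leaves G. util G z)"
proof -
  have "(\<Sum>a\<in>actsI G I. dUf G \<pi> I a) = (\<Sum>a\<in>actsI G I. 1 * dUf G \<pi> I a)" by simp
  also have "\<dots> = (\<Sum>z\<in>leaves G. (\<Sum>j<length z. if take j z \<in> I then 1 * (\<Prod>k\<in>{..<length z}-{j}. fac G \<pi> z k) else 0) * util G z)"
    by (rule dUf_swap[OF I])
  also have "\<dots> \<le> (\<Sum>z\<in>leaves G. Fr G \<pi> I * util G z)"
    using leaf_Fr_bound[OF I \<pi>] leavesH util_nonneg by (intro sum_mono mult_right_mono) auto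
  also have "\<dots> = Fr G \<pi> I * (\<Sum>z\<in>leaves G. util G z)" by (simp add: sum_distrib_left)
  finally show ?thesis .
qed

lemma g_deriv:
  assumes I: "I \<in> infosets G"
  shows "((\<lambda>t. U G (\<pi>(I := (\<lambda>a. \<pi> I a + t * d a)))) has_real_derivative (\<Sum>a\<in>actsI G I. d a * dUf G \<pi> I a)) (at 0)"
proof -
  define \<beta> where "\<beta> z k = (if take k z \<in> I then d (z ! k) else 0)" for z k
  have facI: "take k z \<in> I \<Longrightarrow> fac G \<pi> z k = \<pi> I (z ! k)" for z k
    using fac_upd[OF I, of \<pi> "\<pi> I" z k] by simp
  have eq: "U G (\<pi>(I := (\<lambda>a. \<pi> I a + t * d a))) = (\<Sum>z\<in>leaves G. (\<Prod>k<length z. fac G \<pi> z k + t * \<beta> z k) * util G z)" for t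
    unfolding U_upd[OF I] \<beta>_def by (intro sum.cong refl arg_cong2[where f=times] prod.cong) (auto simp: facI)
  have "((\<lambda>t. \<Sum>z\<in>leaves G. (\<Prod>k<length z. fac G \<pi> z k + t * \<beta> z k) * util G z) has_real_derivative
     (\<Sum>z\<in>leaves G. (\<Sum>j<length z. if take j z \<in> I then d (z ! j) * (\<Prod>k\<in>{..<length z}-{j}. fac G \<pi> z k) else 0) * util G z)) (at 0)"
    apply (rule DERIV_sum)
    apply (rule DERIV_cmult_right)
    apply (rule DERIV_prod_affine[THEN DERIV_cong])
     apply simp
    apply (intro sum.cong refl)
    apply (simp add: \<beta>_def)
    done
  then show ?thesis unfolding eq dUf_swap[OF I] .
qed

lemma CDT_max_bound:
  assumes \<pi>: "\<pi> \<in> Pd \<delta>" and mx: "\<And>\<pi>'. \<pi>' \<in> Pd \<delta> \<Longrightarrow> U G \<pi>' \<le> U G \<pi>"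
    and \<delta>: "0 < \<delta>" "Mc * \<delta> \<le> 1" and I: "I \<in> infosets G" and \<sigma>: "\<sigma> \<in> simplex (actsI G I)"
  shows "(\<Sum>a\<in>actsI G I. (\<sigma> a - \<pi> I a) * dUf G \<pi> I a) \<le> Fr G \<pi> I * (\<delta> * Cst)"
proof -
  let ?A = "actsI G I"
  let ?m = "real (card ?A)"
  define \<sigma>' where "\<sigma>' = (\<lambda>a. (1 - ?m * \<delta>) * \<sigma> a + \<delta>)"
  have md: "?m * \<delta> \<le> 1" using card_le_Mc[OF I] \<delta> by (meson dual_order.trans mult_right_mono less_imp_le)
  have \<sigma>'s: "\<sigma>' \<in> simplex ?A" and \<sigma>'d: "\<And>a. a \<in> ?A \<Longrightarrow> \<delta> \<le> \<sigma>' a"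
    and \<sigma>'c: "\<And>a. a \<in> ?A \<Longrightarrow> \<bar>\<sigma> a - \<sigma>' a\<bar> \<le> ?m * \<delta>"
    using sigma'_props[OF \<sigma> fin_actsI \<delta>(1) md] unfolding \<sigma>'_def by auto
  have \<pi>s: "\<pi> \<in> strategies G" using \<pi> unfolding Pd_def by blast
  have \<pi>I: "\<pi> I \<in> simplex ?A" using \<pi>s I unfolding strategies_def by blast
  have \<pi>d: "a \<in> ?A \<Longrightarrow> \<delta> \<le> \<pi> I a" for a using \<pi> I unfolding Pd_def by blast
  define d where "d a = \<sigma>' a - \<pi> I a" for a
  define g where "g t = U G (\<pi>(I := (\<lambda>a. \<pi> I a + t * d a)))" for t
  define D where "D = (\<Sum>a\<in>?A. d a * dUf G \<pi> I a)"
  have gD: "(g has_real_derivative D) (at 0)" unfolding g_def D_def by (rule g_deriv[OF I])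
  have g0: "g 0 = U G \<pi>" unfolding g_def by simp
  have gle: "g t \<le> g 0" if t: "0 \<le> t" "t \<le> 1" for t
  proof -
    let ?x = "\<lambda>a. \<pi> I a + t * d a"
    have xe: "?x a = (1 - t) * \<pi> I a + t * \<sigma>' a" for a unfolding d_def by (simp add: algebra_simps)
    have xd: "\<delta> \<le> ?x a" if a: "a \<in> ?A" for a
    proof -
      have "(1 - t) * \<delta> \<le> (1 - t) * \<pi> I a" using \<pi>d[OF a] t by (intro mult_left_mono) auto
      moreover have "t * \<delta> \<le> t * \<sigma>' a" using \<sigma>'d[OF a] t by (intro mult_left_mono) auto
      ultimately show ?thesis unfolding xe by (simp add: algebra_simps)
    qed
    have "sum ?x ?A = sum (\<pi> I) ?A + t * (sum \<sigma>' ?A - sum (\<pi> I) ?A)"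
      unfolding d_def by (simp add: sum.distrib sum_distrib_left sum_subtractf algebra_simps)
    then have "sum ?x ?A = 1" using \<sigma>'s \<pi>I unfolding simplex_def by simp
    moreover have "\<forall>a\<in>?A. 0 \<le> ?x a"
    proof
      fix a assume "a \<in> ?A" then have "\<delta> \<le> ?x a" by (rule xd)
      then show "0 \<le> ?x a" using \<delta>(1) by linarith
    qed
    ultimately have "?x \<in> simplex ?A" unfolding simplex_def by blast
    then have "\<pi>(I := ?x) \<in> Pd \<delta>" using upd_Pd[OF \<pi> I] xd by blast
    then have "U G (\<pi>(I := ?x)) \<le> U G \<pi>" by (rule mx)
    then show ?thesis unfolding g_def by simp
  qed
  have D0: "D \<le> 0"
  proof (rule ccontr)
    assume "\<not> D \<le> 0"
    then have "0 < D" by simp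
    then obtain e where e: "0 < e" "\<And>h. 0 < h \<Longrightarrow> h < e \<Longrightarrow> g 0 < g (0 + h)"
      using DERIV_pos_inc_right[OF gD] by blast
    let ?h = "min (e / 2) 1"
    have "g 0 < g ?h" using e(2)[of ?h] e(1) by simp
    moreover have "g ?h \<le> g 0" using e(1) by (intro gle) auto
    ultimately show False by simp
  qed
  have "(\<Sum>a\<in>?A. (\<sigma> a - \<pi> I a) * dUf G \<pi> I a) = (\<Sum>a\<in>?A. (\<sigma> a - \<sigma>' a) * dUf G \<pi> I a) + D"
    unfolding D_def d_def by (simp add: sum.distrib[symmetric] algebra_simps)
  also have "\<dots> \<le> (\<Sum>a\<in>?A. (?m * \<delta>) * dUf G \<pi> I a)"
  proof -
    have "(\<Sum>a\<in>?A. (\<sigma> a - \<sigma>' a) * dUf G \<pi> I a) \<le> (\<Sum>a\<in>?A. (?m * \<delta>) * dUf G \<pi> I a)"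
    proof (rule sum_mono)
      fix a assume a: "a \<in> ?A"
      have "\<sigma> a - \<sigma>' a \<le> ?m * \<delta>" using \<sigma>'c[OF a] by simp
      then show "(\<sigma> a - \<sigma>' a) * dUf G \<pi> I a \<le> (?m * \<delta>) * dUf G \<pi> I a"
        using dUf_nonneg[OF \<pi>s] by (intro mult_right_mono) auto
    qed
    then show ?thesis using D0 by simp
  qed
  also have "\<dots> = (?m * \<delta>) * (\<Sum>a\<in>?A. dUf G \<pi> I a)" by (simp add: sum_distrib_left)
  also have "\<dots> \<le> (?m * \<delta>) * (Fr G \<pi> I * (\<Sum>z\<in>leaves G. util G z))"
    using dUf_sum_le[OF I \<pi>s] \<delta>(1) by (intro mult_left_mono) auto
  also have "\<dots> \<le> Fr G \<pi> I * (\<delta> * Cst)"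
  proof -
    have F: "0 \<le> Fr G \<pi> I" by (rule Fr_nonneg[OF I \<pi>s])
    have S: "0 \<le> (\<Sum>z\<in>leaves G. util G z)" using util_nonneg by (simp add: sum_nonneg)
    have S2: "(\<Sum>z\<in>leaves G. util G z) \<le> (\<Sum>z\<in>leaves G. (real (length z) + 1) * util G z)"
    proof (rule sum_mono)
      fix z assume z: "z \<in> leaves G"
      have "1 * util G z \<le> (real (length z) + 1) * util G z"
        using util_nonneg[OF z] by (intro mult_right_mono) auto
      then show "util G z \<le> (real (length z) + 1) * util G z" by simp
    qed
    have "?m * (\<Sum>z\<in>leaves G. util G z) \<le> Mc * (\<Sum>z\<in>leaves G. (real (length z) + 1) * util G z)"
      using card_le_Mc[OF I] S S2 Mc_nonneg by (intro mult_mono) auto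
    then have "(\<delta> * Fr G \<pi> I) * (?m * (\<Sum>z\<in>leaves G. util G z)) \<le> (\<delta> * Fr G \<pi> I) * Cst"
      unfolding Cst_def using F \<delta>(1) by (intro mult_left_mono) auto
    then show ?thesis by (simp add: ac_simps)
  qed
  finally show ?thesis .
qed

end



lemma sum_two_points:
  fixes f :: "'b \<Rightarrow> real"
  assumes "finite A" "a \<in> A" "b \<in> A" "a \<noteq> b"
  shows "(\<Sum>x\<in>A. (if x = a then - p else if x = b then p else 0) * f x) = p * (f b - f a)"
proof -
  have "(\<Sum>x\<in>A. (if x = a then - p else if x = b then p else 0) * f x) =
    (\<Sum>x\<in>A. (if x = a then - p * f x else 0)) + (\<Sum>x\<in>A. (if x = b then p * f x else 0))"
    unfolding sum.distrib[symmetric] using assms(4) by (intro sum.cong) auto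
  also have "\<dots> = - p * f a + p * f b" using assms by simp
  finally show ?thesis by (simp add: algebra_simps)
qed

context wfg
begin

lemma Cst_nonneg: "0 \<le> Cst"
  unfolding Cst_def using Mc_nonneg util_nonneg by (intro mult_nonneg_nonneg sum_nonneg) auto

lemma uniform_Pd:
  assumes "0 \<le> \<delta>" "Mc * \<delta> \<le> 1"
  shows "(\<lambda>I a. 1 / real (card (actsI G I))) \<in> Pd \<delta>"
  unfolding Pd_def strategies_def
proof (intro CollectI conjI ballI)
  fix I assume I: "I \<in> infosets G"
  have c: "0 < card (actsI G I)" using actsI_ne[OF I] fin_actsI card_gt_0_iff by blast
  show "(\<lambda>a. 1 / real (card (actsI G I))) \<in> simplex (actsI G I)"
    unfolding simplex_def using c by simp
  fix a assume "a \<in> actsI G I"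
  have "real (card (actsI G I)) * \<delta> \<le> Mc * \<delta>" using card_le_Mc[OF I] assms(1) by (rule mult_right_mono)
  then have "real (card (actsI G I)) * \<delta> \<le> 1" using assms(2) by linarith
  then show "\<delta> \<le> 1 / real (card (actsI G I))" using c by (simp add: field_simps)
qed

lemma Pd_mono: "\<pi> \<in> Pd \<delta> \<Longrightarrow> 0 \<le> \<delta> \<Longrightarrow> \<pi> \<in> Pd 0"
  unfolding Pd_def by force

lemma converges_upd:
  assumes "converges_to G \<pi>s \<pi>"
  shows "converges_to G (\<lambda>k. (\<pi>s k)(I := \<sigma>)) (\<pi>(I := \<sigma>))"
  using assms unfolding converges_to_def by auto

lemma exists_Nash: "\<exists>\<pi>. \<pi> \<in> EDT_Nash G \<and> \<pi> \<in> CDT_Nash G"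
proof -
  define \<delta> where "\<delta> n = inverse (real (Suc n)) / (Mc + 1)" for n
  have Mc0: "0 \<le> Mc" by (rule Mc_nonneg)
  have \<delta>pos: "0 < \<delta> n" for n unfolding \<delta>_def using Mc0 by simp
  have \<delta>Mc: "Mc * \<delta> n \<le> 1" for n
  proof -
    have "Mc / (Mc + 1) \<le> 1" using Mc0 by simp
    moreover have "inverse (real (Suc n)) \<le> 1" by (simp add: inverse_le_1_iff)
    moreover have "Mc * \<delta> n = (Mc / (Mc + 1)) * inverse (real (Suc n))" unfolding \<delta>_def by simp
    moreover have "0 \<le> Mc / (Mc + 1)" using Mc0 by simp
    moreover have "0 \<le> inverse (real (Suc n))" by simp
    ultimately show ?thesis by (metis mult_le_one)
  qed
  have \<delta>0: "\<delta> \<longlonglongrightarrow> 0" unfolding \<delta>_def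
    using tendsto_divide_zero[OF LIMSEQ_inverse_real_of_nat, of "Mc + 1"] by simp
  have "\<forall>n. \<exists>\<pi>\<in>Pd (\<delta> n). \<forall>\<pi>'\<in>Pd (\<delta> n). U G \<pi>' \<le> U G \<pi>"
  proof
    fix n
    have "Pd (\<delta> n) \<noteq> {}" using uniform_Pd[OF less_imp_le[OF \<delta>pos] \<delta>Mc] by blast
    then show "\<exists>\<pi>\<in>Pd (\<delta> n). \<forall>\<pi>'\<in>Pd (\<delta> n). U G \<pi>' \<le> U G \<pi>"
      using max_exists less_imp_le[OF \<delta>pos] by blast
  qed
  then obtain x where x: "\<And>n. x n \<in> Pd (\<delta> n)" and xm: "\<And>n \<pi>'. \<pi>' \<in> Pd (\<delta> n) \<Longrightarrow> U G \<pi>' \<le> U G (x n)"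
    by metis
  have xs: "x n \<in> strategies G" for n using x[of n] unfolding Pd_def by blast
  obtain r \<pi> where r: "strict_mono r" and c: "converges_to G (\<lambda>n. x (r n)) \<pi>"
    using strat_subseq[of x, OF xs] by blast
  define \<pi>s where "\<pi>s k = x (r k)" for k
  define \<epsilon> where "\<epsilon> k = (Cst + 1) * \<delta> (r k)" for k
  have c': "converges_to G \<pi>s \<pi>" using c unfolding \<pi>s_def .
  have \<pi>sP: "\<pi>s k \<in> Pd (\<delta> (r k))" for k unfolding \<pi>s_def by (rule x)
  have \<pi>sm: "\<And>\<pi>'. \<pi>' \<in> Pd (\<delta> (r k)) \<Longrightarrow> U G \<pi>' \<le> U G (\<pi>s k)" for k unfolding \<pi>s_def by (rule xm)
  have \<pi>ss: "\<pi>s k \<in> strategies G" for k using \<pi>sP[of k] unfolding Pd_def by blast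
  have \<pi>fm: "fully_mixed G (\<pi>s k)" for k
    using \<pi>sP[of k] \<delta>pos[of "r k"] unfolding Pd_def fully_mixed_def by force
  have \<pi>S: "\<pi> \<in> strategies G"
  proof -
    have "\<pi>s n \<in> Pd 0" for n using Pd_mono[OF \<pi>sP less_imp_le[OF \<delta>pos]] .
    then have "\<pi> \<in> Pd 0" using Pd_closed[OF _ c'] by blast
    then show ?thesis unfolding Pd_def by blast
  qed
  have Cst0: "0 \<le> Cst" by (rule Cst_nonneg)
  have \<epsilon>pos: "0 < \<epsilon> k" for k unfolding \<epsilon>_def using Cst0 \<delta>pos by simp
  have \<delta>r0: "(\<lambda>k. \<delta> (r k)) \<longlonglongrightarrow> 0" using LIMSEQ_subseq_LIMSEQ[OF \<delta>0 r] by (simp add: comp_def)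
  have \<epsilon>0: "\<epsilon> \<longlonglongrightarrow> 0" unfolding \<epsilon>_def using tendsto_mult[OF tendsto_const \<delta>r0, of "Cst + 1"] by simp
  have edtb: "U G ((\<pi>s k)(I := \<sigma>)) - U G (\<pi>s k) \<le> probI G (\<pi>s k) I * (\<delta> (r k) * Cst)"
    if "I \<in> infosets G" "\<sigma> \<in> simplex (actsI G I)" for k I \<sigma>
    by (rule EDT_max_bound[OF \<pi>sP \<pi>sm \<delta>pos \<delta>Mc that])
  have cdtb: "(\<Sum>a\<in>actsI G I. (\<sigma> a - \<pi>s k I a) * dUf G (\<pi>s k) I a) \<le> Fr G (\<pi>s k) I * (\<delta> (r k) * Cst)"
    if "I \<in> infosets G" "\<sigma> \<in> simplex (actsI G I)" for k I \<sigma>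
    by (rule CDT_max_bound[OF \<pi>sP \<pi>sm \<delta>pos \<delta>Mc that])
  have dCe: "\<delta> (r k) * Cst \<le> \<epsilon> k" for k unfolding \<epsilon>_def using \<delta>pos[of "r k"] by (simp add: algebra_simps)
  have EDTr: "EDT_rational G \<pi>"
    unfolding EDT_rational_def
  proof (intro conjI exI[of _ \<pi>s] exI[of _ \<epsilon>] allI ballI impI)
    show "\<pi> \<in> strategies G" by (rule \<pi>S)
    fix k show "\<pi>s k \<in> strategies G" by (rule \<pi>ss)
    show "fully_mixed G (\<pi>s k)" by (rule \<pi>fm)
    show "0 < \<epsilon> k" by (rule \<epsilon>pos)
  next
    show "converges_to G \<pi>s \<pi>" by (rule c')
    show "\<epsilon> \<longlonglongrightarrow> 0" by (rule \<epsilon>0)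
  next
    fix k I \<sigma> assume I: "I \<in> infosets G" and p: "0 < probI G (\<pi>s k) I" and \<sigma>: "\<sigma> \<in> simplex (actsI G I)"
    have "(U G ((\<pi>s k)(I := \<sigma>)) - U G (\<pi>s k)) / probI G (\<pi>s k) I \<le> \<delta> (r k) * Cst"
      using edtb[OF I \<sigma>, of k] p by (simp add: divide_le_eq mult.commute)
    then show "(U G ((\<pi>s k)(I := \<sigma>)) - U G (\<pi>s k)) / probI G (\<pi>s k) I \<le> \<epsilon> k" using dCe[of k] by linarith
  qed
  have CDTr: "CDT_rational G \<pi>"
    unfolding CDT_rational_def
  proof (intro conjI exI[of _ \<pi>s] exI[of _ \<epsilon>] allI ballI impI)
    show "\<pi> \<in> strategies G" by (rule \<pi>S)
    fix k show "\<pi>s k \<in> strategies G" by (rule \<pi>ss)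
    show "fully_mixed G (\<pi>s k)" by (rule \<pi>fm)
    show "0 < \<epsilon> k" by (rule \<epsilon>pos)
  next
    show "converges_to G \<pi>s \<pi>" by (rule c')
    show "\<epsilon> \<longlonglongrightarrow> 0" by (rule \<epsilon>0)
  next
    fix k I \<sigma> assume I: "I \<in> infosets G" and p: "0 < Fr G (\<pi>s k) I" and \<sigma>: "\<sigma> \<in> simplex (actsI G I)"
    have "U_CDT G \<sigma> (\<pi>s k) I - U G (\<pi>s k) = (\<Sum>a\<in>actsI G I. (\<sigma> a - \<pi>s k I a) * dUf G (\<pi>s k) I a)"
      unfolding U_CDT_def using dU_eq[OF I] by simp
    then have "(U_CDT G \<sigma> (\<pi>s k) I - U G (\<pi>s k)) / Fr G (\<pi>s k) I \<le> \<delta> (r k) * Cst"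
      using cdtb[OF I \<sigma>, of k] p by (simp add: divide_le_eq mult.commute)
    then show "(U_CDT G \<sigma> (\<pi>s k) I - U G (\<pi>s k)) / Fr G (\<pi>s k) I \<le> \<epsilon> k" using dCe[of k] by linarith
  qed
  have EDTe: "EDT_eq G \<pi>"
    unfolding EDT_eq_def
  proof (intro conjI ballI)
    show "\<pi> \<in> strategies G" by (rule \<pi>S)
    fix I \<sigma> assume I: "I \<in> infosets G" and \<sigma>: "\<sigma> \<in> simplex (actsI G I)"
    have b: "U G ((\<pi>s k)(I := \<sigma>)) \<le> U G (\<pi>s k) + \<delta> (r k) * (real (card I) * Cst)" for k
    proof -
      have "probI G (\<pi>s k) I * (\<delta> (r k) * Cst) \<le> real (card I) * (\<delta> (r k) * Cst)"
        using probI_le_card[OF I \<pi>ss] Cst0 \<delta>pos[of "r k"] by (intro mult_right_mono) auto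
      then show ?thesis using edtb[OF I \<sigma>, of k] by (simp add: algebra_simps)
    qed
    have l1: "(\<lambda>k. U G ((\<pi>s k)(I := \<sigma>))) \<longlonglongrightarrow> U G (\<pi>(I := \<sigma>))" by (rule U_tendsto[OF converges_upd[OF c']])
    have l2: "(\<lambda>k. U G (\<pi>s k) + \<delta> (r k) * (real (card I) * Cst)) \<longlonglongrightarrow> U G \<pi> + 0 * (real (card I) * Cst)"
      by (intro tendsto_intros U_tendsto[OF c'] \<delta>r0)
    show "U G (\<pi>(I := \<sigma>)) \<le> U G \<pi>" using LIMSEQ_le[OF l1 l2] b by simp
  qed
  have VI: "(\<Sum>a\<in>actsI G I. (\<sigma> a - \<pi> I a) * dUf G \<pi> I a) \<le> 0"
    if I: "I \<in> infosets G" and \<sigma>: "\<sigma> \<in> simplex (actsI G I)" for I \<sigma>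
  proof -
    have b: "(\<Sum>a\<in>actsI G I. (\<sigma> a - \<pi>s k I a) * dUf G (\<pi>s k) I a) \<le> \<delta> (r k) * (real (card I) * Cst)" for k
    proof -
      have "Fr G (\<pi>s k) I * (\<delta> (r k) * Cst) \<le> real (card I) * (\<delta> (r k) * Cst)"
        using Fr_le_card[OF I \<pi>ss] Cst0 \<delta>pos[of "r k"] by (intro mult_right_mono) auto
      then show ?thesis using cdtb[OF I \<sigma>, of k] by (simp add: algebra_simps)
    qed
    have l1: "(\<lambda>k. \<Sum>a\<in>actsI G I. (\<sigma> a - \<pi>s k I a) * dUf G (\<pi>s k) I a) \<longlonglongrightarrow> (\<Sum>a\<in>actsI G I. (\<sigma> a - \<pi> I a) * dUf G \<pi> I a)"
    proof (intro tendsto_sum tendsto_mult tendsto_diff tendsto_const dUf_tendsto[OF c'])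
      fix a assume "a \<in> actsI G I"
      then show "(\<lambda>k. \<pi>s k I a) \<longlonglongrightarrow> \<pi> I a" using c' I unfolding converges_to_def by blast
    qed
    have l2: "(\<lambda>k. \<delta> (r k) * (real (card I) * Cst)) \<longlonglongrightarrow> 0 * (real (card I) * Cst)"
      by (intro tendsto_intros \<delta>r0)
    show ?thesis using LIMSEQ_le[OF l1 l2] b by simp
  qed
  have CDTe: "CDT_eq G \<pi>"
    unfolding CDT_eq_def
  proof (intro conjI)
    show "\<pi> \<in> strategies G" by (rule \<pi>S)
    define lam where "lam I = Max (dUf G \<pi> I ` actsI G I)" for I
    define mu where "mu I a = lam I - dUf G \<pi> I a" for I a
    show "\<exists>lam mu. \<forall>I\<in>infosets G. \<forall>a\<in>actsI G I. 0 \<le> mu I a \<and> mu I a * \<pi> I a = 0 \<and> dU G \<pi> I a + mu I a = lam I"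
    proof (intro exI[of _ lam] exI[of _ mu] ballI conjI)
      fix I a assume I: "I \<in> infosets G" and a: "a \<in> actsI G I"
      have fin: "finite (dUf G \<pi> I ` actsI G I)" using fin_actsI by simp
      have ge: "dUf G \<pi> I a \<le> lam I" unfolding lam_def using fin a by (intro Max_ge) auto
      then show "0 \<le> mu I a" unfolding mu_def by simp
      show "dU G \<pi> I a + mu I a = lam I" unfolding mu_def dU_eq[OF I] by simp
      show "mu I a * \<pi> I a = 0"
      proof (rule ccontr)
        assume ne: "mu I a * \<pi> I a \<noteq> 0"
        have \<pi>I: "\<pi> I \<in> simplex (actsI G I)" using \<pi>S I unfolding strategies_def by blast
        have pa: "0 \<le> \<pi> I a" using simplex_ge0[OF \<pi>I a] .
        then have pa': "0 < \<pi> I a" using ne by (cases "\<pi> I a = 0") auto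
        have mu': "0 < mu I a" using ne ge unfolding mu_def by (cases "lam I = dUf G \<pi> I a") auto
        obtain b where b: "b \<in> actsI G I" "dUf G \<pi> I b = lam I"
          using Max_in[OF fin] a unfolding lam_def by fastforce
        have ab: "a \<noteq> b" using mu' b(2) unfolding mu_def by auto
        define dd where "dd x = (if x = a then - \<pi> I a else if x = b then \<pi> I a else 0)" for x
        define \<sigma> where "\<sigma> x = \<pi> I x + dd x" for x
        have sd: "(\<Sum>x\<in>actsI G I. dd x) = 0"
          using sum_two_points[OF fin_actsI a b(1) ab, of "\<pi> I a" "\<lambda>_. 1"] unfolding dd_def by simp
        have "\<sigma> \<in> simplex (actsI G I)"
          unfolding simplex_def
        proof (intro CollectI conjI ballI)
          fix x assume x: "x \<in> actsI G I"
          show "0 \<le> \<sigma> x" unfolding \<sigma>_def dd_def using simplex_ge0[OF \<pi>I x] pa by auto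
        next
          show "sum \<sigma> (actsI G I) = 1" unfolding \<sigma>_def sum.distrib sd using \<pi>I unfolding simplex_def by simp
        qed
        then have "(\<Sum>x\<in>actsI G I. (\<sigma> x - \<pi> I x) * dUf G \<pi> I x) \<le> 0" by (rule VI[OF I])
        moreover have "(\<Sum>x\<in>actsI G I. (\<sigma> x - \<pi> I x) * dUf G \<pi> I x) = \<pi> I a * (dUf G \<pi> I b - dUf G \<pi> I a)"
          unfolding \<sigma>_def dd_def using sum_two_points[OF fin_actsI a b(1) ab, of "\<pi> I a" "dUf G \<pi> I"] by simp
        moreover have "0 < \<pi> I a * (dUf G \<pi> I b - dUf G \<pi> I a)" using pa' mu' b(2) unfolding mu_def by simp
        ultimately show False by simp
      qed
    qed
  qed
  have "realization_equiv G \<pi> \<pi>" unfolding realization_equiv_def by simp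
  then show ?thesis unfolding EDT_Nash_def CDT_Nash_def using EDTe EDTr CDTe CDTr by blast
qed

end



lemma vals_ineq:
  fixes f g :: "'s \<Rightarrow> real"
  assumes A: "A \<noteq> {}" and B: "B \<noteq> {}" and le: "\<And>a b. a \<in> A \<Longrightarrow> b \<in> B \<Longrightarrow> f a \<le> g b"
    and f0: "\<And>a. a \<in> A \<Longrightarrow> 0 \<le> f a" and gM: "\<And>b. b \<in> B \<Longrightarrow> g b \<le> M"
  shows "Inf (f ` A) \<le> Inf (g ` B) \<and> Sup (f ` A) \<le> Sup (g ` B)"
proof
  obtain a0 where a0: "a0 \<in> A" using A by blast
  obtain b0 where b0: "b0 \<in> B" using B by blast
  have bb: "bdd_below (f ` A)" using f0 by (intro bdd_belowI[where m=0]) auto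
  have "Inf (f ` A) \<le> f a0" using a0 bb by (intro cInf_lower) auto
  also have "f a0 \<le> Inf (g ` B)" using B le[OF a0] by (intro cInf_greatest) auto
  finally show "Inf (f ` A) \<le> Inf (g ` B)" .
  have ba: "bdd_above (g ` B)" using gM by (intro bdd_aboveI[where M=M]) auto
  have "Sup (f ` A) \<le> g b0" using A le[OF _ b0] by (intro cSup_least) auto
  also have "g b0 \<le> Sup (g ` B)" using b0 ba by (intro cSup_upper) auto
  finally show "Sup (f ` A) \<le> Sup (g ` B)" .
qed

theorem corollary2:
  fixes G :: "'a efg"
  assumes "wf_game G"
  shows "worst_val (pr1 G) (CDT_Nash (pr1 G)) \<ge> worst_val G (CDT_Nash G) \<and>
         best_val (pr1 G) (CDT_Nash (pr1 G)) \<ge> best_val G (CDT_Nash G) \<and>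
         worst_val (pr1 G) (EDT_Nash (pr1 G)) \<ge> worst_val G (EDT_Nash G) \<and>
         best_val (pr1 G) (EDT_Nash (pr1 G)) \<ge> best_val G (EDT_Nash G)"
proof -
  interpret W: wfg G by (rule wfg.intro[OF assms])
  interpret P: prg "pr1 G" by (rule W.prg_pr1)
  obtain \<pi>0 where \<pi>0: "\<pi>0 \<in> EDT_Nash G" "\<pi>0 \<in> CDT_Nash G" using W.exists_Nash by blast
  obtain \<pi>1 where \<pi>1: "\<pi>1 \<in> EDT_Nash (pr1 G)" "\<pi>1 \<in> CDT_Nash (pr1 G)" using P.exists_Nash by blast
  have EN: "\<pi> \<in> EDT_Nash G' \<Longrightarrow> \<pi> \<in> strategies G'" for \<pi> and G' :: "'a efg"
    unfolding EDT_Nash_def EDT_eq_def by blast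
  have CN: "\<pi> \<in> CDT_Nash G' \<Longrightarrow> \<pi> \<in> strategies G'" for \<pi> and G' :: "'a efg"
    unfolding CDT_Nash_def CDT_eq_def by blast
  have bound: "U (pr1 G) \<pi> \<le> (\<Sum>z\<in>leaves (pr1 G). util (pr1 G) z)" if "\<pi> \<in> strategies (pr1 G)" for \<pi>
    using P.U_le[OF that] .
  have E: "U G \<sigma> \<le> U (pr1 G) \<pi>" if "\<sigma> \<in> EDT_Nash G" "\<pi> \<in> EDT_Nash (pr1 G)" for \<sigma> \<pi>
  proof -
    have "U G \<sigma> = U (pr1 G) (W.lift \<sigma>)" using W.U_lift by simp
    also have "\<dots> \<le> U (pr1 G) \<pi>" using P.EDT_opt[OF that(2) W.lift_strat[OF EN[OF that(1)]]] .
    finally show ?thesis .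
  qed
  have C: "U G \<sigma> \<le> U (pr1 G) \<pi>" if "\<sigma> \<in> CDT_Nash G" "\<pi> \<in> CDT_Nash (pr1 G)" for \<sigma> \<pi>
  proof -
    have "U G \<sigma> = U (pr1 G) (W.lift \<sigma>)" using W.U_lift by simp
    also have "\<dots> \<le> U (pr1 G) \<pi>" using P.CDT_opt[OF that(2) W.lift_strat[OF CN[OF that(1)]]] .
    finally show ?thesis .
  qed
  have e: "Inf (U G ` EDT_Nash G) \<le> Inf (U (pr1 G) ` EDT_Nash (pr1 G)) \<and>
           Sup (U G ` EDT_Nash G) \<le> Sup (U (pr1 G) ` EDT_Nash (pr1 G))"
    by (rule vals_ineq[OF _ _ E]) (use \<pi>0 \<pi>1 W.U_nonneg EN bound in auto)
  have c: "Inf (U G ` CDT_Nash G) \<le> Inf (U (pr1 G) ` CDT_Nash (pr1 G)) \<and>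
           Sup (U G ` CDT_Nash G) \<le> Sup (U (pr1 G) ` CDT_Nash (pr1 G))"
    by (rule vals_ineq[OF _ _ C]) (use \<pi>0 \<pi>1 W.U_nonneg CN bound in auto)
  show ?thesis unfolding worst_val_def best_val_def using e c by simp
qed


end
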